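(* In the setting of the context, if $\Phi\in\mathcal D(A)$, $\Phi^2\in\mathcal D(A)$ and $A\Phi\in\mathcal L^2_{uni}$, then the MAF $M[\Phi]$ is square integrable. Moreover, $\sup_{t\in[s,T]}|\Phi^{s,\eta}_t|\in L^2(\mathbb P^{s,\eta})$ for all $(s,\eta)\in[0,T]\times\Omega$, where $\Phi^{s,\eta}:=\Phi_s(\eta)+\int_s^{s\vee\cdot}(A\Phi)_rdV_r+M[\Phi]^{s,\eta}$.
   Context: Let $E$ be Polish, $\Omega=\mathbb D(\mathbb R_+,E)$, $X_t(\omega)=\omega(t)$, $\mathcal F=\sigma(X_r,r\ge0)$, $\mathcal F^o_t=\sigma(X_r,r\le t)$, $\mathcal F_t=\bigcap_{u>t}\mathcal F^o_u$, $\mathbb F^o=(\mathcal F^o_t)$, $\omega^t=\omega(\cdot\wedge t)$. $(\mathbb P^{s,\eta})_{(s,\eta)\in\mathbb R_+\times\Omega}$ is a family of probabilities on $(\Omega,\mathcal F)$ with $\mathbb P^{s,\eta}(\omega^s=\eta^s)=1$, $\eta\mapsto\mathbb P^{s,\eta}(F)$ $\mathcal F^o_s$-measurable, $(t,\omega)\mapsto\mathbb P^{t,\omega}(F)$ $\mathbb F^o$-progressive, and $\mathbb P^{s,\eta}(F|\mathcal F_t)(\omega)=\mathbb P^{s,\eta}(F|\mathcal F^o_t)(\omega)=\mathbb P^{t,\omega}(F)$ $\mathbb P^{s,\eta}$-a.s., $t\ge s$. $P_s[\phi](\eta)=\mathbb E^{s,\eta}[\phi]$; $\mathbb F^{s,\eta}$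 the $\mathbb P^{s,\eta}$-completion of $(\mathcal F_t)$. Fix $T>0$, $V:[0,T]\to\mathbb R_+$ continuous non-decreasing, extended constantly after $T$. $(\mathcal D(A),A)$: $\mathcal D(A)$ a linear space of real $\mathbb F^o$-progressive processes, $A$ linear into $\mathbb F^o$-progressive processes, with $\int_0^t|A\Phi_r(\omega)|dV_r<\infty$, $\mathbb E^{s,\eta}[\int_s^t|A\Phi_r|dV_r]<\infty$, $\mathbb E^{s,\eta}|\Phi_t|<\infty$ ($t\ge s$); each $\Phi\in\mathcal D(A)$ constant after $T$, $A\Phi=0$ after $T$; weak generator property: $P_s[\Phi_t](\eta)=\Phi_s(\eta)+\int_s^tP_s[A\Phi_r](\eta)dV_r$. A path-dependent MAF is a random field $(M_{t,u})_{0\le t\le u}$, $M_{t,u}$ $\mathcal F^o_u$-measurable, with for each $(s,\eta)$ a càdlàg $(\mathbb P^{s,\eta},\mathbb F^{s,\eta})$-martingale $M^{s,\eta}$ zero on $[0,s]$ (càdlàg version) such that $M_{t,u}=M^{s,\eta}_u-M^{s,\eta}_t$ $\mathbb P^{s,\eta}$-a.s., $s\le t\le u$; square integrable if each $M^{s,\eta}$ is. For $\Phi\in\mathcal D(A)$, $M[\Phi]_{t,u}(\omega)=\Phi_u(\omega)-\Phi_t(\omega)-\int_t^uA\Phi_r(\omega)dV_r$ is a MAF with càdlàg version $M[\Phi]^{s,\eta}$ (so $\Phi^{s,\eta}$ is a $\mathbb P^{s,\eta}$-version of $\Phi$ on $[s,T]$). $\mathcal L^2_{uni}$: $\mathbb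 F^o$-progressive $Y$ with $\mathbb E^{s,\eta}[\int_s^T|Y_r|^2dV_r]<\infty$ for all $(s,\eta)\in[0,T]\times\Omega$. *)

theory Defs
  imports "HOL-Probability.Probability"
begin

text \<open>Paths are functions on the real line; only t >= 0 matters, and by convention
  a path is constant (equal to its value at 0) on the negative half line.\<close>

definition cadlag_on_Rplus :: "(real \<Rightarrow> 'a::topological_space) \<Rightarrow> bool" where
  "cadlag_on_Rplus f \<longleftrightarrow>
     (\<forall>t\<ge>0. (f \<longlongrightarrow> f t) (at_right t)) \<and>
     (\<forall>t>0. \<exists>l. (f \<longlongrightarrow> l) (at_left t))"

definition Omega :: "(real \<Rightarrow> 'e::polish_space) set" where
  "Omega = {\<omega>. cadlag_on_Rplus \<omega> \<and> (\<forall>t<0. \<omega> t = \<omega> 0)}"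

definition Xc :: "real \<Rightarrow> (real \<Rightarrow> 'e) \<Rightarrow> 'e" where
  "Xc r \<omega> = \<omega> r"

definition Fall :: "(real \<Rightarrow> 'e::polish_space) measure" where
  "Fall = sigma Omega {Xc r -` B \<inter> Omega | r B. 0 \<le> r \<and> B \<in> sets borel}"

definition Fo :: "real \<Rightarrow> (real \<Rightarrow> 'e::polish_space) measure" where
  "Fo t = sigma Omega {Xc r -` B \<inter> Omega | r B. 0 \<le> r \<and> r \<le> t \<and> B \<in> sets borel}"

definition Ft :: "real \<Rightarrow> (real \<Rightarrow> 'e::polish_space) measure" where
  "Ft t = sigma Omega (\<Inter>u\<in>{t<..}. sets (Fo u))"

definition Fcompl :: "(real \<Rightarrow> 'e) measure \<Rightarrow> real \<Rightarrow> (real \<Rightarrow> 'e::polish_space) measure" where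
  "Fcompl Q t = sigma Omega
     {A. A \<subseteq> Omega \<and> (\<exists>B\<in>sets (Ft t). \<exists>N\<in>null_sets Q. (A - B) \<union> (B - A) \<subseteq> N)}"

definition progressive :: "(real \<Rightarrow> (real \<Rightarrow> 'e::polish_space) \<Rightarrow> real) \<Rightarrow> bool" where
  "progressive Y \<longleftrightarrow>
     (\<forall>t\<ge>0. (\<lambda>(r, \<omega>). Y r \<omega>) \<in> borel_measurable (restrict_space borel {0..t} \<Otimes>\<^sub>M Fo t))"

definition markov_family :: "(real \<Rightarrow> (real \<Rightarrow> 'e) \<Rightarrow> (real \<Rightarrow> 'e::polish_space) measure) \<Rightarrow> bool" where
  "markov_family P \<longleftrightarrow>
     (\<forall>s\<ge>0. \<forall>\<eta>\<in>Omega. prob_space (P s \<eta>) \<and> sets (P s \<eta>) = sets Fall) \<and>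
     (\<forall>s\<ge>0. \<forall>\<eta>\<in>Omega. measure (P s \<eta>) {\<omega>\<in>Omega. \<forall>r\<in>{0..s}. \<omega> r = \<eta> r} = 1) \<and>
     (\<forall>s\<ge>0. \<forall>F\<in>sets Fall. (\<lambda>\<eta>. measure (P s \<eta>) F) \<in> borel_measurable (Fo s)) \<and>
     (\<forall>F\<in>sets Fall. progressive (\<lambda>t \<omega>. measure (P t \<omega>) F)) \<and>
     (\<forall>s\<ge>0. \<forall>\<eta>\<in>Omega. \<forall>t\<ge>s. \<forall>F\<in>sets Fall.
        (AE \<omega> in P s \<eta>. real_cond_exp (P s \<eta>) (Ft t) (indicator F) \<omega> = measure (P t \<omega>) F) \<and>
        (AE \<omega> in P s \<eta>. real_cond_exp (P s \<eta>) (Fo t) (indicator F) \<omega> = measure (P t \<omega>) F))"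

definition integrator :: "real \<Rightarrow> (real \<Rightarrow> real) \<Rightarrow> bool" where
  "integrator T V \<longleftrightarrow> 0 < T \<and> mono V \<and> continuous_on UNIV V \<and>
     (\<forall>t\<ge>0. 0 \<le> V t) \<and> (\<forall>t\<ge>T. V t = V T)"

definition dVint :: "(real \<Rightarrow> real) \<Rightarrow> real \<Rightarrow> real \<Rightarrow> (real \<Rightarrow> real) \<Rightarrow> real" where
  "dVint V s t f = set_lebesgue_integral (interval_measure V) {s..t} f"

definition dVint_abs :: "(real \<Rightarrow> real) \<Rightarrow> real \<Rightarrow> real \<Rightarrow> (real \<Rightarrow> real) \<Rightarrow> ennreal" where
  "dVint_abs V s t f = set_nn_integral (interval_measure V) {s..t} (\<lambda>r. ennreal \<bar>f r\<bar>)"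

definition weak_generator ::
  "(real \<Rightarrow> (real \<Rightarrow> 'e) \<Rightarrow> (real \<Rightarrow> 'e::polish_space) measure) \<Rightarrow> real \<Rightarrow> (real \<Rightarrow> real)
   \<Rightarrow> (real \<Rightarrow> (real \<Rightarrow> 'e) \<Rightarrow> real) set
   \<Rightarrow> ((real \<Rightarrow> (real \<Rightarrow> 'e) \<Rightarrow> real) \<Rightarrow> (real \<Rightarrow> (real \<Rightarrow> 'e) \<Rightarrow> real)) \<Rightarrow> bool" where
  "weak_generator P T V D A \<longleftrightarrow>
     \<comment> \<open>D(A) is a linear space and A is linear\<close>
     (\<lambda>t \<omega>. 0) \<in> D \<and>
     (\<forall>\<Phi>\<in>D. \<forall>\<Psi>\<in>D. (\<lambda>t \<omega>. \<Phi> t \<omega> + \<Psi> t \<omega>) \<in> D \<and>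
         A (\<lambda>t \<omega>. \<Phi> t \<omega> + \<Psi> t \<omega>) = (\<lambda>t \<omega>. A \<Phi> t \<omega> + A \<Psi> t \<omega>)) \<and>
     (\<forall>\<Phi>\<in>D. \<forall>c::real. (\<lambda>t \<omega>. c * \<Phi> t \<omega>) \<in> D \<and>
         A (\<lambda>t \<omega>. c * \<Phi> t \<omega>) = (\<lambda>t \<omega>. c * A \<Phi> t \<omega>)) \<and>
     (\<forall>\<Phi>\<in>D.
        progressive \<Phi> \<and> progressive (A \<Phi>) \<and>
        (\<forall>\<omega>\<in>Omega. \<forall>t\<ge>0. dVint_abs V 0 t (\<lambda>r. A \<Phi> r \<omega>) < \<infinity>) \<and>
        (\<forall>s\<ge>0. \<forall>\<eta>\<in>Omega. \<forall>t\<ge>s.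
            (\<integral>\<^sup>+ \<omega>. dVint_abs V s t (\<lambda>r. A \<Phi> r \<omega>) \<partial>P s \<eta>) < \<infinity> \<and>
            integrable (P s \<eta>) (\<Phi> t)) \<and>
        (\<forall>t\<ge>T. \<forall>\<omega>\<in>Omega. \<Phi> t \<omega> = \<Phi> T \<omega>) \<and>
        (\<forall>t>T. \<forall>\<omega>\<in>Omega. A \<Phi> t \<omega> = 0) \<and>
        (\<forall>s\<ge>0. \<forall>\<eta>\<in>Omega. \<forall>t\<ge>s.
            (\<integral>\<omega>. \<Phi> t \<omega> \<partial>P s \<eta>) =
              \<Phi> s \<eta> + dVint V s t (\<lambda>r. \<integral>\<omega>. A \<Phi> r \<omega> \<partial>P s \<eta>)))"

definition cadlag_martingale ::
  "'a measure \<Rightarrow> (real \<Rightarrow> 'a measure) \<Rightarrow> (real \<Rightarrow> 'a \<Rightarrow> real) \<Rightarrow> bool" where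
  "cadlag_martingale Q G M \<longleftrightarrow>
     (\<forall>\<omega>\<in>space Q. cadlag_on_Rplus (\<lambda>t. M t \<omega>)) \<and>
     (\<forall>t\<ge>0. M t \<in> borel_measurable (G t) \<and> integrable Q (M t)) \<and>
     (\<forall>t u A. 0 \<le> t \<and> t \<le> u \<and> A \<in> sets (G t) \<longrightarrow>
        set_lebesgue_integral Q A (M u) = set_lebesgue_integral Q A (M t))"

definition square_integrable_proc :: "'a measure \<Rightarrow> (real \<Rightarrow> 'a \<Rightarrow> real) \<Rightarrow> bool" where
  "square_integrable_proc Q M \<longleftrightarrow>
     (\<forall>t\<ge>0. integrable Q (\<lambda>\<omega>. (M t \<omega>)\<^sup>2)) \<and>
     (\<exists>C. \<forall>t\<ge>0. (\<integral>\<omega>. (M t \<omega>)\<^sup>2 \<partial>Q) \<le> C)"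

definition MAF_version ::
  "(real \<Rightarrow> (real \<Rightarrow> 'e) \<Rightarrow> (real \<Rightarrow> 'e::polish_space) measure) \<Rightarrow> real \<Rightarrow> (real \<Rightarrow> 'e)
   \<Rightarrow> (real \<Rightarrow> real \<Rightarrow> (real \<Rightarrow> 'e) \<Rightarrow> real) \<Rightarrow> (real \<Rightarrow> (real \<Rightarrow> 'e) \<Rightarrow> real) \<Rightarrow> bool" where
  "MAF_version P s \<eta> M Ms \<longleftrightarrow>
     cadlag_martingale (completion (P s \<eta>)) (Fcompl (P s \<eta>)) Ms \<and>
     (\<forall>t\<in>{0..s}. \<forall>\<omega>\<in>Omega. Ms t \<omega> = 0) \<and>
     (\<forall>t u. s \<le> t \<and> t \<le> u \<longrightarrow> (AE \<omega> in P s \<eta>. M t u \<omega> = Ms u \<omega> - Ms t \<omega>))"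

definition is_MAF ::
  "(real \<Rightarrow> (real \<Rightarrow> 'e) \<Rightarrow> (real \<Rightarrow> 'e::polish_space) measure)
   \<Rightarrow> (real \<Rightarrow> real \<Rightarrow> (real \<Rightarrow> 'e) \<Rightarrow> real) \<Rightarrow> bool" where
  "is_MAF P M \<longleftrightarrow>
     (\<forall>t u. 0 \<le> t \<and> t \<le> u \<longrightarrow> M t u \<in> borel_measurable (Fo u)) \<and>
     (\<forall>s\<ge>0. \<forall>\<eta>\<in>Omega. \<exists>Ms. MAF_version P s \<eta> M Ms)"

definition square_integrable_MAF ::
  "(real \<Rightarrow> (real \<Rightarrow> 'e) \<Rightarrow> (real \<Rightarrow> 'e::polish_space) measure)
   \<Rightarrow> (real \<Rightarrow> real \<Rightarrow> (real \<Rightarrow> 'e) \<Rightarrow> real) \<Rightarrow> bool" where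
  "square_integrable_MAF P M \<longleftrightarrow> is_MAF P M \<and>
     (\<forall>s\<ge>0. \<forall>\<eta>\<in>Omega. \<forall>Ms. MAF_version P s \<eta> M Ms \<longrightarrow>
        square_integrable_proc (completion (P s \<eta>)) Ms)"

definition MPhi :: "(real \<Rightarrow> real) \<Rightarrow> (real \<Rightarrow> (real \<Rightarrow> 'e) \<Rightarrow> real) \<Rightarrow> (real \<Rightarrow> (real \<Rightarrow> 'e) \<Rightarrow> real)
   \<Rightarrow> real \<Rightarrow> real \<Rightarrow> (real \<Rightarrow> 'e) \<Rightarrow> real" where
  "MPhi V \<Phi> A\<Phi> t u \<omega> = \<Phi> u \<omega> - \<Phi> t \<omega> - dVint V t u (\<lambda>r. A\<Phi> r \<omega>)"

definition L2_uni ::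
  "(real \<Rightarrow> (real \<Rightarrow> 'e) \<Rightarrow> (real \<Rightarrow> 'e::polish_space) measure) \<Rightarrow> real \<Rightarrow> (real \<Rightarrow> real)
   \<Rightarrow> (real \<Rightarrow> (real \<Rightarrow> 'e) \<Rightarrow> real) set" where
  "L2_uni P T V = {Y. progressive Y \<and>
     (\<forall>s\<in>{0..T}. \<forall>\<eta>\<in>Omega.
        (\<integral>\<^sup>+ \<omega>. set_nn_integral (interval_measure V) {s..T} (\<lambda>r. ennreal ((Y r \<omega>)\<^sup>2)) \<partial>P s \<eta>) < \<infinity>)}"

end

theory Submission
  imports Defs
begin

lemma sub_abs:
  fixes Q :: "'a measure" and G :: "'a measure" and Xt Xm :: "'a \<Rightarrow> real"
  assumes sub: "sets G \<subseteq> sets Q" "space G = space Q"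
    and meas: "Xt \<in> borel_measurable G"
    and int: "integrable Q Xt" "integrable Q Xm"
    and mart: "\<And>A. A \<in> sets G \<Longrightarrow> (\<integral>\<omega>. indicator A \<omega> * Xm \<omega> \<partial>Q) = (\<integral>\<omega>. indicator A \<omega> * Xt \<omega> \<partial>Q)"
    and A: "A \<in> sets G"
  shows "(\<integral>\<^sup>+\<omega>. ennreal (indicator A \<omega> * \<bar>Xt \<omega>\<bar>) \<partial>Q) \<le> (\<integral>\<^sup>+\<omega>. ennreal (indicator A \<omega> * \<bar>Xm \<omega>\<bar>) \<partial>Q)"
proof -
  define Ap where "Ap = A \<inter> {\<omega>\<in>space G. 0 \<le> Xt \<omega>}"
  define An where "An = A \<inter> {\<omega>\<in>space G. Xt \<omega> < 0}"
  have Ap: "Ap \<in> sets G" unfolding Ap_def using A meas by measurable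
  have An: "An \<in> sets G" unfolding An_def using A meas by measurable
  have ApQ: "Ap \<in> sets Q" "An \<in> sets Q" "A \<in> sets Q" using Ap An A sub by auto
  have i1: "integrable Q (\<lambda>\<omega>. indicator A \<omega> * \<bar>Xt \<omega>\<bar>)"
    using integrable_real_mult_indicator[OF ApQ(3) integrable_abs[OF int(1)]] by (simp add: mult.commute)
  have i2: "integrable Q (\<lambda>\<omega>. indicator A \<omega> * \<bar>Xm \<omega>\<bar>)"
    using integrable_real_mult_indicator[OF ApQ(3) integrable_abs[OF int(2)]] by (simp add: mult.commute)
  have ip: "integrable Q (\<lambda>\<omega>. indicator Ap \<omega> * X \<omega>)" if "integrable Q X" for X :: "'a \<Rightarrow> real"
    using integrable_real_mult_indicator[OF ApQ(1) that] by (simp add: mult.commute)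
  have iN: "integrable Q (\<lambda>\<omega>. indicator An \<omega> * X \<omega>)" if "integrable Q X" for X :: "'a \<Rightarrow> real"
    using integrable_real_mult_indicator[OF ApQ(2) that] by (simp add: mult.commute)
  have "(\<integral>\<omega>. indicator A \<omega> * \<bar>Xt \<omega>\<bar> \<partial>Q) = (\<integral>\<omega>. indicator Ap \<omega> * Xt \<omega> - indicator An \<omega> * Xt \<omega> \<partial>Q)"
    by (rule Bochner_Integration.integral_cong) (auto simp: Ap_def An_def indicator_def sub)
  also have "\<dots> = (\<integral>\<omega>. indicator Ap \<omega> * Xt \<omega> \<partial>Q) - (\<integral>\<omega>. indicator An \<omega> * Xt \<omega> \<partial>Q)"
    by (rule Bochner_Integration.integral_diff[OF ip iN]) (use int in auto)
  also have "\<dots> = (\<integral>\<omega>. indicator Ap \<omega> * Xm \<omega> \<partial>Q) - (\<integral>\<omega>. indicator An \<omega> * Xm \<omega> \<partial>Q)"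
    using mart[OF Ap] mart[OF An] by simp
  also have "\<dots> = (\<integral>\<omega>. indicator Ap \<omega> * Xm \<omega> - indicator An \<omega> * Xm \<omega> \<partial>Q)"
    by (rule Bochner_Integration.integral_diff[symmetric, OF ip iN]) (use int in auto)
  also have "\<dots> \<le> (\<integral>\<omega>. indicator A \<omega> * \<bar>Xm \<omega>\<bar> \<partial>Q)"
    by (rule integral_mono[OF Bochner_Integration.integrable_diff[OF ip iN] i2])
       (use int in \<open>auto simp: Ap_def An_def indicator_def\<close>)
  finally have le: "(\<integral>\<omega>. indicator A \<omega> * \<bar>Xt \<omega>\<bar> \<partial>Q) \<le> (\<integral>\<omega>. indicator A \<omega> * \<bar>Xm \<omega>\<bar> \<partial>Q)" .
  show ?thesis
    using le by (subst (1 2) nn_integral_eq_integral[OF _ AE_I2]) (auto intro: i1 i2)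
qed


lemma doob_weak:
  fixes Q :: "'a measure" and G :: "real \<Rightarrow> 'a measure" and X :: "real \<Rightarrow> 'a \<Rightarrow> real"
  assumes F: "finite F" "F \<noteq> {}"
    and sub: "\<And>t. t \<in> F \<Longrightarrow> sets (G t) \<subseteq> sets Q" "\<And>t. t \<in> F \<Longrightarrow> space (G t) = space Q"
    and mono: "\<And>t u. t \<in> F \<Longrightarrow> u \<in> F \<Longrightarrow> t \<le> u \<Longrightarrow> sets (G t) \<subseteq> sets (G u)"
    and meas: "\<And>t. t \<in> F \<Longrightarrow> X t \<in> borel_measurable (G t)"
    and int: "\<And>t. t \<in> F \<Longrightarrow> integrable Q (X t)"
    and mart: "\<And>t A. t \<in> F \<Longrightarrow> A \<in> sets (G t) \<Longrightarrow>
        (\<integral>\<omega>. indicator A \<omega> * X (Max F) \<omega> \<partial>Q) = (\<integral>\<omega>. indicator A \<omega> * X t \<omega> \<partial>Q)"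
    and l: "0 < l"
  shows "ennreal l * emeasure Q {\<omega>\<in>space Q. l \<le> Max ((\<lambda>t. \<bar>X t \<omega>\<bar>) ` F)} \<le>
     (\<integral>\<^sup>+\<omega>. ennreal (indicator {\<omega>\<in>space Q. l \<le> Max ((\<lambda>t. \<bar>X t \<omega>\<bar>) ` F)} \<omega> * \<bar>X (Max F) \<omega>\<bar>) \<partial>Q)"
proof -
  define m where "m = Max F"
  have mF: "m \<in> F" using F by (simp add: m_def)
  define B where "B t = {\<omega>\<in>space Q. l \<le> \<bar>X t \<omega>\<bar> \<and> (\<forall>u\<in>F. u < t \<longrightarrow> \<bar>X u \<omega>\<bar> < l)}" for t
  have measu: "X u \<in> borel_measurable (G t)" if "t \<in> F" "u \<in> F" "u \<le> t" for t u
    by (rule measurable_from_subalg[OF _ meas[OF that(2)]])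
       (use that sub mono in \<open>auto simp: subalgebra_def\<close>)
  have BG: "B t \<in> sets (G t)" if t: "t \<in> F" for t
  proof -
    have [measurable]: "X t \<in> borel_measurable (G t)" using meas t by auto
    have [measurable]: "u \<in> F \<Longrightarrow> u < t \<Longrightarrow> X u \<in> borel_measurable (G t)" for u
      using measu[OF t, of u] by auto
    have "B t = {\<omega>\<in>space (G t). l \<le> \<bar>X t \<omega>\<bar> \<and> (\<forall>u\<in>F. u < t \<longrightarrow> \<bar>X u \<omega>\<bar> < l)}"
      using sub(2)[OF t] by (simp add: B_def)
    also have "\<dots> \<in> sets (G t)" using F(1) by measurable
    finally show ?thesis .
  qed
  have BQ: "B t \<in> sets Q" if "t \<in> F" for t using BG[OF that] sub(1)[OF that] by auto
  define S where "S = {\<omega>\<in>space Q. l \<le> Max ((\<lambda>t. \<bar>X t \<omega>\<bar>) ` F)}"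
  have S_eq: "S = (\<Union>t\<in>F. B t)"
  proof (intro equalityI subsetI)
    fix \<omega> assume "\<omega> \<in> S"
    then have sp: "\<omega> \<in> space Q" and "\<exists>t\<in>F. l \<le> \<bar>X t \<omega>\<bar>" using F by (auto simp: S_def Max_ge_iff)
    then have ne: "{t\<in>F. l \<le> \<bar>X t \<omega>\<bar>} \<noteq> {}" by auto
    define t0 where "t0 = Min {t\<in>F. l \<le> \<bar>X t \<omega>\<bar>}"
    have t0: "t0 \<in> F" "l \<le> \<bar>X t0 \<omega>\<bar>" using Min_in[OF _ ne] F(1) by (auto simp: t0_def)
    have "\<bar>X u \<omega>\<bar> < l" if "u \<in> F" "u < t0" for u
    proof (rule ccontr)
      assume "\<not> \<bar>X u \<omega>\<bar> < l"
      then have "t0 \<le> u" unfolding t0_def using that F(1) by (intro Min_le) auto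
      then show False using that by auto
    qed
    then show "\<omega> \<in> (\<Union>t\<in>F. B t)" using t0 sp by (auto simp: B_def)
  next
    fix \<omega> assume "\<omega> \<in> (\<Union>t\<in>F. B t)"
    then obtain t where "t \<in> F" "\<omega> \<in> B t" by auto
    then show "\<omega> \<in> S" using F by (auto simp: B_def S_def Max_ge_iff)
  qed
  have disj: "disjoint_family_on B F"
    unfolding disjoint_family_on_def
  proof (intro ballI impI)
    fix t u assume "t \<in> F" "u \<in> F" "t \<noteq> u"
    then show "B t \<inter> B u = {}"
      by (cases "t < u") (auto simp: B_def)
  qed
  have each: "ennreal l * emeasure Q (B t) \<le> (\<integral>\<^sup>+\<omega>. ennreal (indicator (B t) \<omega> * \<bar>X m \<omega>\<bar>) \<partial>Q)"
    if t: "t \<in> F" for t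
  proof -
    have "ennreal l * emeasure Q (B t) = (\<integral>\<^sup>+\<omega>. ennreal l * indicator (B t) \<omega> \<partial>Q)"
      using BQ[OF t] by (simp add: nn_integral_cmult_indicator)
    also have "\<dots> \<le> (\<integral>\<^sup>+\<omega>. ennreal (indicator (B t) \<omega> * \<bar>X t \<omega>\<bar>) \<partial>Q)"
      by (intro nn_integral_mono) (auto simp: B_def indicator_def)
    also have "\<dots> \<le> (\<integral>\<^sup>+\<omega>. ennreal (indicator (B t) \<omega> * \<bar>X m \<omega>\<bar>) \<partial>Q)"
      by (rule sub_abs[OF sub(1,2)[OF t] meas[OF t] int[OF t] int[OF mF]])
         (use mart t BG in \<open>auto simp: m_def\<close>)
    finally show ?thesis .
  qed
  have "ennreal l * emeasure Q S = ennreal l * (\<Sum>t\<in>F. emeasure Q (B t))"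
  proof -
    have "B ` F \<subseteq> sets Q" using BQ by auto
    then show ?thesis using sum_emeasure[of B F Q] disj F(1) by (simp add: S_eq)
  qed
  also have "\<dots> = (\<Sum>t\<in>F. ennreal l * emeasure Q (B t))" by (simp add: sum_distrib_left)
  also have "\<dots> \<le> (\<Sum>t\<in>F. \<integral>\<^sup>+\<omega>. ennreal (indicator (B t) \<omega> * \<bar>X m \<omega>\<bar>) \<partial>Q)"
    by (intro sum_mono each)
  also have "\<dots> = (\<integral>\<^sup>+\<omega>. (\<Sum>t\<in>F. ennreal (indicator (B t) \<omega> * \<bar>X m \<omega>\<bar>)) \<partial>Q)"
  proof (rule nn_integral_sum[symmetric])
    fix t assume t: "t \<in> F"
    have "X m \<in> borel_measurable Q"
      using measurable_from_subalg[OF _ meas[OF mF]] sub[OF mF] by (auto simp: subalgebra_def)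
    then show "(\<lambda>\<omega>. ennreal (indicator (B t) \<omega> * \<bar>X m \<omega>\<bar>)) \<in> borel_measurable Q"
      using BQ[OF t] by measurable
  qed
  also have "\<dots> = (\<integral>\<^sup>+\<omega>. ennreal (indicator S \<omega> * \<bar>X m \<omega>\<bar>) \<partial>Q)"
  proof (intro nn_integral_cong)
    fix \<omega>
    have "(\<Sum>t\<in>F. ennreal (indicator (B t) \<omega> * \<bar>X m \<omega>\<bar>)) = ennreal (\<Sum>t\<in>F. indicator (B t) \<omega> * \<bar>X m \<omega>\<bar>)"
      by (rule sum_ennreal) auto
    also have "(\<Sum>t\<in>F. indicator (B t) \<omega> * \<bar>X m \<omega>\<bar>) = indicator S \<omega> * \<bar>X m \<omega>\<bar>"
      unfolding S_eq indicator_UN_disjoint[OF F(1) disj] by (simp add: sum_distrib_right)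
    finally show "(\<Sum>t\<in>F. ennreal (indicator (B t) \<omega> * \<bar>X m \<omega>\<bar>)) = ennreal (indicator S \<omega> * \<bar>X m \<omega>\<bar>)" .
  qed
  finally show ?thesis by (simp add: S_def m_def)
qed


lemma doob_L2:
  fixes Q :: "'a measure" and G :: "real \<Rightarrow> 'a measure" and X :: "real \<Rightarrow> 'a \<Rightarrow> real"
  assumes Q: "prob_space Q"
    and F: "finite F" "F \<noteq> {}"
    and sub: "\<And>t. t \<in> F \<Longrightarrow> sets (G t) \<subseteq> sets Q" "\<And>t. t \<in> F \<Longrightarrow> space (G t) = space Q"
    and mono: "\<And>t u. t \<in> F \<Longrightarrow> u \<in> F \<Longrightarrow> t \<le> u \<Longrightarrow> sets (G t) \<subseteq> sets (G u)"
    and meas: "\<And>t. t \<in> F \<Longrightarrow> X t \<in> borel_measurable (G t)"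
    and int: "\<And>t. t \<in> F \<Longrightarrow> integrable Q (X t)"
    and int2: "\<And>t. t \<in> F \<Longrightarrow> integrable Q (\<lambda>\<omega>. (X t \<omega>)\<^sup>2)"
    and mart: "\<And>t A. t \<in> F \<Longrightarrow> A \<in> sets (G t) \<Longrightarrow>
        (\<integral>\<omega>. indicator A \<omega> * X (Max F) \<omega> \<partial>Q) = (\<integral>\<omega>. indicator A \<omega> * X t \<omega> \<partial>Q)"
  shows "(\<integral>\<^sup>+\<omega>. ennreal ((Max ((\<lambda>t. \<bar>X t \<omega>\<bar>) ` F))\<^sup>2) \<partial>Q) \<le> 4 * (\<integral>\<^sup>+\<omega>. ennreal ((X (Max F) \<omega>)\<^sup>2) \<partial>Q)"
proof -
  interpret Q: prob_space Q by (rule Q)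
  interpret QL: pair_sigma_finite Q lborel
    by (simp add: Q.sigma_finite_measure_axioms lborel.sigma_finite_measure_axioms pair_sigma_finite_def)
  define m where "m = Max F"
  have mF: "m \<in> F" using F by (simp add: m_def)
  define Y where "Y \<omega> = Max ((\<lambda>t. \<bar>X t \<omega>\<bar>) ` F)" for \<omega>
  have XQ[measurable]: "X t \<in> borel_measurable Q" if "t \<in> F" for t
    using measurable_from_subalg[OF _ meas[OF that]] sub[OF that] by (auto simp: subalgebra_def)
  have YQ[measurable]: "Y \<in> borel_measurable Q"
    unfolding Y_def using F(1) XQ by measurable
  have Y0: "0 \<le> Y \<omega>" for \<omega>
  proof -
    have "\<bar>X m \<omega>\<bar> \<le> Y \<omega>" unfolding Y_def using F mF by (intro Max_ge) auto
    then show ?thesis by linarith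
  qed
  have Xm_le: "\<bar>X m \<omega>\<bar> \<le> Y \<omega>" for \<omega> unfolding Y_def using F mF by (intro Max_ge) auto
  have intY2: "integrable Q (\<lambda>\<omega>. (Y \<omega>)\<^sup>2)"
  proof (rule Bochner_Integration.integrable_bound)
    show "integrable Q (\<lambda>\<omega>. \<Sum>t\<in>F. (X t \<omega>)\<^sup>2)" using int2 by (intro Bochner_Integration.integrable_sum) auto
    show "(\<lambda>\<omega>. (Y \<omega>)\<^sup>2) \<in> borel_measurable Q" by measurable
    show "AE \<omega> in Q. norm ((Y \<omega>)\<^sup>2) \<le> norm (\<Sum>t\<in>F. (X t \<omega>)\<^sup>2)"
    proof (intro AE_I2)
      fix \<omega>
      obtain t0 where t0: "t0 \<in> F" "Y \<omega> = \<bar>X t0 \<omega>\<bar>"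
      proof -
        have "Y \<omega> \<in> (\<lambda>t. \<bar>X t \<omega>\<bar>) ` F" unfolding Y_def using F by (intro Max_in) auto
        then show ?thesis using that by auto
      qed
      have "(Y \<omega>)\<^sup>2 = (X t0 \<omega>)\<^sup>2" using t0 by simp
      also have "\<dots> \<le> (\<Sum>t\<in>F. (X t \<omega>)\<^sup>2)"
        using t0 F by (intro member_le_sum) auto
      finally show "norm ((Y \<omega>)\<^sup>2) \<le> norm (\<Sum>t\<in>F. (X t \<omega>)\<^sup>2)"
        by (simp add: sum_nonneg)
    qed
  qed
  have intXm: "integrable Q (\<lambda>\<omega>. (X m \<omega>)\<^sup>2)" using int2 mF by auto
  have FTC: "ennreal ((Y \<omega>)\<^sup>2) = (\<integral>\<^sup>+x. ennreal (2*x) * indicator {0..Y \<omega>} x \<partial>lborel)" for \<omega>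
  proof -
    have "(\<integral>\<^sup>+x. ennreal (2*x) * indicator {0..Y \<omega>} x \<partial>lborel) = ennreal ((Y \<omega>)\<^sup>2 - 0\<^sup>2)"
      by (rule nn_integral_FTC_Icc[where F="\<lambda>x. x\<^sup>2"])
         (auto intro!: derivative_eq_intros simp: Y0)
    then show ?thesis by simp
  qed
  have M1[measurable]: "(\<lambda>(\<omega>, x). ennreal (2*x) * indicator {0..Y \<omega>} x) \<in> borel_measurable (Q \<Otimes>\<^sub>M lborel)"
  proof -
    have "(\<lambda>(\<omega>, x). ennreal (2*x) * indicator {0..Y \<omega>} x) = (\<lambda>p. ennreal (2 * snd p) * indicator {p. 0 \<le> snd p \<and> snd p \<le> Y (fst p)} p)"
      by (auto simp: fun_eq_iff indicator_def)
    also have "\<dots> \<in> borel_measurable (Q \<Otimes>\<^sub>M lborel)" by measurable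
    finally show ?thesis .
  qed
  have M2[measurable]: "(\<lambda>(\<omega>, x). ennreal (2*\<bar>X m \<omega>\<bar>) * indicator {0..Y \<omega>} x) \<in> borel_measurable (Q \<Otimes>\<^sub>M lborel)"
  proof -
    have "(\<lambda>(\<omega>, x). ennreal (2*\<bar>X m \<omega>\<bar>) * indicator {0..Y \<omega>} x) = (\<lambda>p. ennreal (2 * \<bar>X m (fst p)\<bar>) * indicator {p. 0 \<le> snd p \<and> snd p \<le> Y (fst p)} p)"
      by (auto simp: fun_eq_iff indicator_def)
    also have "\<dots> \<in> borel_measurable (Q \<Otimes>\<^sub>M lborel)" using mF by measurable
    finally show ?thesis .
  qed
  have "(\<integral>\<^sup>+\<omega>. ennreal ((Y \<omega>)\<^sup>2) \<partial>Q) = (\<integral>\<^sup>+\<omega>. \<integral>\<^sup>+x. ennreal (2*x) * indicator {0..Y \<omega>} x \<partial>lborel \<partial>Q)"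
    by (simp add: FTC)
  also have "\<dots> = (\<integral>\<^sup>+x. \<integral>\<^sup>+\<omega>. ennreal (2*x) * indicator {0..Y \<omega>} x \<partial>Q \<partial>lborel)"
    by (rule QL.Fubini'[symmetric]) (use M1 in simp)
  also have "\<dots> \<le> (\<integral>\<^sup>+x. \<integral>\<^sup>+\<omega>. ennreal (2*\<bar>X m \<omega>\<bar>) * indicator {0..Y \<omega>} x \<partial>Q \<partial>lborel)"
  proof (rule nn_integral_mono)
    fix x :: real
    show "(\<integral>\<^sup>+\<omega>. ennreal (2*x) * indicator {0..Y \<omega>} x \<partial>Q) \<le> (\<integral>\<^sup>+\<omega>. ennreal (2*\<bar>X m \<omega>\<bar>) * indicator {0..Y \<omega>} x \<partial>Q)"
    proof (cases "0 < x")
      case False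
      then have "(\<integral>\<^sup>+\<omega>. ennreal (2*x) * indicator {0..Y \<omega>} x \<partial>Q) = 0"
        by (simp add: ennreal_neg)
      then show ?thesis by simp
    next
      case True
      define S where "S = {\<omega>\<in>space Q. x \<le> Max ((\<lambda>t. \<bar>X t \<omega>\<bar>) ` F)}"
      have SQ: "S \<in> sets Q" unfolding S_def using F(1) by measurable
      have "(\<integral>\<^sup>+\<omega>. ennreal (2*x) * indicator {0..Y \<omega>} x \<partial>Q) = (\<integral>\<^sup>+\<omega>. ennreal (2*x) * indicator S \<omega> \<partial>Q)"
        using True by (intro nn_integral_cong) (auto simp: S_def Y_def indicator_def)
      also have "\<dots> = ennreal 2 * (ennreal x * emeasure Q S)"
      proof -
        have "(\<integral>\<^sup>+\<omega>. ennreal (2*x) * indicator S \<omega> \<partial>Q) = ennreal (2*x) * emeasure Q S"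
          by (rule nn_integral_cmult_indicator[OF SQ])
        also have "\<dots> = ennreal 2 * (ennreal x * emeasure Q S)"
          using True by (simp add: ennreal_mult mult.assoc)
        finally show ?thesis .
      qed
      also have "\<dots> \<le> ennreal 2 * (\<integral>\<^sup>+\<omega>. ennreal (indicator S \<omega> * \<bar>X m \<omega>\<bar>) \<partial>Q)"
        unfolding S_def m_def
        by (intro mult_left_mono doob_weak[where Q=Q and G=G and X=X and F=F and l=x, OF F sub mono meas int mart True]) auto
      also have "\<dots> = (\<integral>\<^sup>+\<omega>. ennreal 2 * ennreal (indicator S \<omega> * \<bar>X m \<omega>\<bar>) \<partial>Q)"
        by (rule nn_integral_cmult[symmetric]) (use SQ mF in measurable)
      also have "\<dots> = (\<integral>\<^sup>+\<omega>. ennreal (2*\<bar>X m \<omega>\<bar>) * indicator {0..Y \<omega>} x \<partial>Q)"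
        using True by (intro nn_integral_cong) (auto simp: S_def Y_def indicator_def ennreal_mult)
      finally show ?thesis .
    qed
  qed
  also have "\<dots> = (\<integral>\<^sup>+\<omega>. \<integral>\<^sup>+x. ennreal (2*\<bar>X m \<omega>\<bar>) * indicator {0..Y \<omega>} x \<partial>lborel \<partial>Q)"
    by (rule QL.Fubini') (use M2 in simp)
  also have "\<dots> = (\<integral>\<^sup>+\<omega>. ennreal (2*\<bar>X m \<omega>\<bar> * Y \<omega>) \<partial>Q)"
    by (intro nn_integral_cong) (simp add: nn_integral_cmult_indicator Y0 ennreal_mult)
  also have "\<dots> \<le> (\<integral>\<^sup>+\<omega>. ennreal (2 * (X m \<omega>)\<^sup>2 + (Y \<omega>)\<^sup>2 / 2) \<partial>Q)"
  proof (intro nn_integral_mono ennreal_leI)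
    fix \<omega>
    have "0 \<le> (Y \<omega> - 2 * \<bar>X m \<omega>\<bar>)\<^sup>2" by simp
    then show "2*\<bar>X m \<omega>\<bar> * Y \<omega> \<le> 2 * (X m \<omega>)\<^sup>2 + (Y \<omega>)\<^sup>2 / 2"
      by (simp add: power2_eq_square algebra_simps)
  qed
  also have "\<dots> = ennreal (\<integral>\<omega>. 2 * (X m \<omega>)\<^sup>2 + (Y \<omega>)\<^sup>2 / 2 \<partial>Q)"
    by (rule nn_integral_eq_integral) (use intXm intY2 in auto)
  also have "\<dots> = ennreal (2 * (\<integral>\<omega>. (X m \<omega>)\<^sup>2 \<partial>Q) + (\<integral>\<omega>. (Y \<omega>)\<^sup>2 \<partial>Q) / 2)"
    using intXm intY2 by simp
  finally have ineq: "(\<integral>\<^sup>+\<omega>. ennreal ((Y \<omega>)\<^sup>2) \<partial>Q) \<le> ennreal (2 * (\<integral>\<omega>. (X m \<omega>)\<^sup>2 \<partial>Q) + (\<integral>\<omega>. (Y \<omega>)\<^sup>2 \<partial>Q) / 2)" .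
  have eY: "(\<integral>\<^sup>+\<omega>. ennreal ((Y \<omega>)\<^sup>2) \<partial>Q) = ennreal (\<integral>\<omega>. (Y \<omega>)\<^sup>2 \<partial>Q)"
    by (rule nn_integral_eq_integral) (use intY2 in auto)
  have eX: "(\<integral>\<^sup>+\<omega>. ennreal ((X m \<omega>)\<^sup>2) \<partial>Q) = ennreal (\<integral>\<omega>. (X m \<omega>)\<^sup>2 \<partial>Q)"
    by (rule nn_integral_eq_integral) (use intXm in auto)
  have p1: "0 \<le> (\<integral>\<omega>. (Y \<omega>)\<^sup>2 \<partial>Q)" "0 \<le> (\<integral>\<omega>. (X m \<omega>)\<^sup>2 \<partial>Q)" by auto
  from ineq have "(\<integral>\<omega>. (Y \<omega>)\<^sup>2 \<partial>Q) \<le> 2 * (\<integral>\<omega>. (X m \<omega>)\<^sup>2 \<partial>Q) + (\<integral>\<omega>. (Y \<omega>)\<^sup>2 \<partial>Q) / 2"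
    unfolding eY using p1 by (subst (asm) ennreal_le_iff) (auto intro: add_nonneg_nonneg)
  then have "(\<integral>\<omega>. (Y \<omega>)\<^sup>2 \<partial>Q) \<le> 4 * (\<integral>\<omega>. (X m \<omega>)\<^sup>2 \<partial>Q)" by linarith
  then have "ennreal (\<integral>\<omega>. (Y \<omega>)\<^sup>2 \<partial>Q) \<le> ennreal 4 * ennreal (\<integral>\<omega>. (X m \<omega>)\<^sup>2 \<partial>Q)"
  proof -
    assume a: "(\<integral>\<omega>. (Y \<omega>)\<^sup>2 \<partial>Q) \<le> 4 * (\<integral>\<omega>. (X m \<omega>)\<^sup>2 \<partial>Q)"
    have "ennreal 4 * ennreal (\<integral>\<omega>. (X m \<omega>)\<^sup>2 \<partial>Q) = ennreal (4 * (\<integral>\<omega>. (X m \<omega>)\<^sup>2 \<partial>Q))"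
      by (rule ennreal_mult[symmetric]) (use p1 in auto)
    then show ?thesis using a by (simp add: ennreal_leI del: ennreal_numeral)
  qed
  then show ?thesis unfolding Y_def[symmetric] m_def[symmetric] eY eX by simp
qed


lemma sq_SUP_le:
  fixes Y :: "nat \<Rightarrow> ennreal"
  assumes inc: "incseq Y"
  shows "(SUP n. Y n)\<^sup>2 \<le> (SUP n. (Y n)\<^sup>2)"
proof -
  have "(SUP n. Y n)\<^sup>2 = (SUP j. SUP i. Y i * Y j)"
    by (simp add: power2_eq_square SUP_mult_left_ennreal SUP_mult_right_ennreal)
  also have "\<dots> \<le> (SUP n. (Y n)\<^sup>2)"
  proof (intro SUP_least)
    fix i j
    have "Y i * Y j \<le> Y (max i j) * Y (max i j)"
      using inc by (intro mult_mono) (auto simp: incseq_def)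
    also have "\<dots> \<le> (SUP n. (Y n)\<^sup>2)"
      by (rule SUP_upper2[of "max i j"]) (auto simp: power2_eq_square)
    finally show "Y i * Y j \<le> (SUP n. (Y n)\<^sup>2)" .
  qed
  finally show ?thesis .
qed

lemma sup_rc:
  fixes f :: "real \<Rightarrow> real"
  assumes rc: "\<And>t. s \<le> t \<Longrightarrow> t < T \<Longrightarrow> (f \<longlongrightarrow> f t) (at_right t)"
  shows "(SUP t\<in>{s..T}. ennreal \<bar>f t\<bar>) \<le> (SUP t\<in>insert T ({s..<T} \<inter> \<rat>). ennreal \<bar>f t\<bar>)"
proof (rule SUP_least)
  fix t assume t: "t \<in> {s..T}"
  show "ennreal \<bar>f t\<bar> \<le> (SUP t\<in>insert T ({s..<T} \<inter> \<rat>). ennreal \<bar>f t\<bar>)"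
  proof (cases "t = T")
    case True then show ?thesis by (intro SUP_upper) auto
  next
    case False
    then have tT: "t < T" using t by auto
    have "\<forall>n::nat. \<exists>r\<in>\<rat>. t < r \<and> r < min T (t + 1 / (Suc n))"
      using tT by (intro allI Rats_dense_in_real) auto
    then obtain q where q: "\<And>n. q n \<in> \<rat>" "\<And>n. t < q n" "\<And>n. q n < min T (t + 1 / Suc n)"
      by metis
    have "q \<longlonglongrightarrow> t"
    proof (rule real_tendsto_sandwich[where f="\<lambda>_. t" and h="\<lambda>n. t + 1 / Suc n"])
      show "\<forall>\<^sub>F n in sequentially. t \<le> q n" using q(2) by (intro always_eventually allI less_imp_le)
      show "\<forall>\<^sub>F n in sequentially. q n \<le> t + 1 / Suc n" using q(3) proof (intro always_eventually allI)
        fix n show "q n \<le> t + 1 / Suc n" using q(3)[of n] by linarith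
      qed
      show "(\<lambda>n. t + 1 / real (Suc n)) \<longlonglongrightarrow> t"
        using tendsto_add[OF tendsto_const[of t] LIMSEQ_inverse_real_of_nat]
        by (simp add: inverse_eq_divide)
    qed simp
    then have "filterlim q (at_right t) sequentially"
      using q(2) by (intro tendsto_imp_filterlim_at_right) auto
    moreover have "(f \<longlongrightarrow> f t) (at_right t)" using rc[of t] t tT by auto
    ultimately have "(\<lambda>n. f (q n)) \<longlonglongrightarrow> f t"
      using filterlim_compose[of f "nhds (f t)" "at_right t" q sequentially] by simp
    then have lim: "(\<lambda>n. ennreal \<bar>f (q n)\<bar>) \<longlonglongrightarrow> ennreal \<bar>f t\<bar>"
      by (intro tendsto_ennrealI tendsto_rabs) assumption
    show ?thesis
    proof (rule LIMSEQ_le_const2[OF lim], intro exI allI impI)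
      fix n
      have "q n \<in> insert T ({s..<T} \<inter> \<rat>)" using q[of n] t by auto
      then show "ennreal \<bar>f (q n)\<bar> \<le> (SUP t\<in>insert T ({s..<T} \<inter> \<rat>). ennreal \<bar>f t\<bar>)"
        by (intro SUP_upper)
    qed
  qed
qed



lemma doob_cadlag:
  fixes Q :: "'a measure" and G :: "real \<Rightarrow> 'a measure" and X :: "real \<Rightarrow> 'a \<Rightarrow> real" and s T :: real
  assumes Q: "prob_space Q" and sT: "s \<le> T"
    and sub: "\<And>t. sets (G t) \<subseteq> sets Q" "\<And>t. space (G t) = space Q"
    and mono: "\<And>t u. t \<le> u \<Longrightarrow> sets (G t) \<subseteq> sets (G u)"
    and meas: "\<And>t. s \<le> t \<Longrightarrow> t \<le> T \<Longrightarrow> X t \<in> borel_measurable (G t)"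
    and int: "\<And>t. s \<le> t \<Longrightarrow> t \<le> T \<Longrightarrow> integrable Q (X t)"
    and int2: "\<And>t. s \<le> t \<Longrightarrow> t \<le> T \<Longrightarrow> integrable Q (\<lambda>\<omega>. (X t \<omega>)\<^sup>2)"
    and mart: "\<And>t A. s \<le> t \<Longrightarrow> t \<le> T \<Longrightarrow> A \<in> sets (G t) \<Longrightarrow>
        (\<integral>\<omega>. indicator A \<omega> * X T \<omega> \<partial>Q) = (\<integral>\<omega>. indicator A \<omega> * X t \<omega> \<partial>Q)"
    and rc: "\<And>\<omega> t. \<omega> \<in> space Q \<Longrightarrow> s \<le> t \<Longrightarrow> t < T \<Longrightarrow> ((\<lambda>u. X u \<omega>) \<longlongrightarrow> X t \<omega>) (at_right t)"
  shows "(\<integral>\<^sup>+\<omega>. (SUP t\<in>{s..T}. ennreal \<bar>X t \<omega>\<bar>)\<^sup>2 \<partial>Q) \<le> 4 * (\<integral>\<^sup>+\<omega>. ennreal ((X T \<omega>)\<^sup>2) \<partial>Q)"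
proof -
  define R where "R = insert T ({s..<T} \<inter> \<rat>)"
  have cR: "countable R" unfolding R_def by (auto intro: countable_rat)
  have neR: "R \<noteq> {}" unfolding R_def by auto
  have RsT: "R \<subseteq> {s..T}" unfolding R_def using sT by auto
  define e where "e = from_nat_into R"
  have eR: "e n \<in> R" for n unfolding e_def using neR by (rule from_nat_into)
  have esurj: "\<exists>n. e n = q" if "q \<in> R" for q unfolding e_def using cR that by (rule from_nat_into_surj)
  define Fn where "Fn n = insert T (e ` {..n})" for n
  have Fn_fin: "finite (Fn n)" "Fn n \<noteq> {}" for n by (auto simp: Fn_def)
  have Fn_sub: "Fn n \<subseteq> {s..T}" for n using eR RsT sT by (auto simp: Fn_def)
  have Fn_max: "Max (Fn n) = T" for n
    using Fn_sub[of n] Fn_fin[of n] by (intro Max_eqI) (auto simp: Fn_def)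
  have XQ[measurable]: "X t \<in> borel_measurable Q" if "s \<le> t" "t \<le> T" for t
    using measurable_from_subalg[OF _ meas[OF that]] sub by (auto simp: subalgebra_def)
  define Yn where "Yn n \<omega> = Max ((\<lambda>t. \<bar>X t \<omega>\<bar>) ` Fn n)" for n \<omega>
  have Yn_meas[measurable]: "Yn n \<in> borel_measurable Q" for n
    unfolding Yn_def using Fn_fin[of n] Fn_sub[of n] by (intro borel_measurable_Max) auto
  have Yn0: "0 \<le> Yn n \<omega>" for n \<omega>
  proof -
    have "\<bar>X T \<omega>\<bar> \<le> Yn n \<omega>" unfolding Yn_def using Fn_fin[of n] by (intro Max_ge) (auto simp: Fn_def)
    then show ?thesis by linarith
  qed
  have bound: "(\<integral>\<^sup>+\<omega>. (ennreal (Yn n \<omega>))\<^sup>2 \<partial>Q) \<le> 4 * (\<integral>\<^sup>+\<omega>. ennreal ((X T \<omega>)\<^sup>2) \<partial>Q)" for n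
  proof -
    have "(\<integral>\<^sup>+\<omega>. ennreal ((Max ((\<lambda>t. \<bar>X t \<omega>\<bar>) ` Fn n))\<^sup>2) \<partial>Q) \<le> 4 * (\<integral>\<^sup>+\<omega>. ennreal ((X (Max (Fn n)) \<omega>)\<^sup>2) \<partial>Q)"
    proof (rule doob_L2[where G=G])
      show "prob_space Q" by (rule Q)
    qed (use Fn_fin Fn_sub sub mono meas int int2 mart Fn_max in \<open>auto simp: subset_iff\<close>)
    then show ?thesis unfolding Fn_max Yn_def[symmetric] by (simp add: ennreal_power Yn0)
  qed
  have inc: "incseq (\<lambda>n \<omega>. (ennreal (Yn n \<omega>))\<^sup>2)"
  proof (rule incseq_SucI, rule le_funI)
    fix n \<omega>
    have "Yn n \<omega> \<le> Yn (Suc n) \<omega>" unfolding Yn_def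
      using Fn_fin by (intro Max_mono image_mono) (auto simp: Fn_def)
    then show "(ennreal (Yn n \<omega>))\<^sup>2 \<le> (ennreal (Yn (Suc n) \<omega>))\<^sup>2"
      by (intro power_mono ennreal_leI) auto
  qed
  have inc1: "incseq (\<lambda>n. ennreal (Yn n \<omega>))" for \<omega>
  proof (rule incseq_SucI)
    fix n
    have "Yn n \<omega> \<le> Yn (Suc n) \<omega>" unfolding Yn_def
      using Fn_fin by (intro Max_mono image_mono) (auto simp: Fn_def)
    then show "ennreal (Yn n \<omega>) \<le> ennreal (Yn (Suc n) \<omega>)" by (rule ennreal_leI)
  qed
  have pw: "(SUP t\<in>{s..T}. ennreal \<bar>X t \<omega>\<bar>)\<^sup>2 \<le> (SUP n. (ennreal (Yn n \<omega>))\<^sup>2)" if \<omega>: "\<omega> \<in> space Q" for \<omega>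
  proof -
    have "(SUP t\<in>{s..T}. ennreal \<bar>X t \<omega>\<bar>) \<le> (SUP t\<in>R. ennreal \<bar>X t \<omega>\<bar>)"
      unfolding R_def by (rule sup_rc[where f="\<lambda>t. X t \<omega>"]) (use rc \<omega> in auto)
    also have "\<dots> \<le> (SUP n. ennreal (Yn n \<omega>))"
    proof (rule SUP_least)
      fix q assume "q \<in> R"
      then obtain n where n: "e n = q" using esurj by blast
      have "\<bar>X q \<omega>\<bar> \<le> Yn n \<omega>" unfolding Yn_def using Fn_fin[of n] n by (intro Max_ge) (auto simp: Fn_def)
      then have "ennreal \<bar>X q \<omega>\<bar> \<le> ennreal (Yn n \<omega>)" by (rule ennreal_leI)
      also have "\<dots> \<le> (SUP n. ennreal (Yn n \<omega>))" by (rule SUP_upper) auto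
      finally show "ennreal \<bar>X q \<omega>\<bar> \<le> (SUP n. ennreal (Yn n \<omega>))" .
    qed
    finally have "(SUP t\<in>{s..T}. ennreal \<bar>X t \<omega>\<bar>)\<^sup>2 \<le> (SUP n. ennreal (Yn n \<omega>))\<^sup>2"
      by (intro power_mono) auto
    also have "\<dots> \<le> (SUP n. (ennreal (Yn n \<omega>))\<^sup>2)" by (rule sq_SUP_le[OF inc1])
    finally show ?thesis .
  qed
  have "(\<integral>\<^sup>+\<omega>. (SUP t\<in>{s..T}. ennreal \<bar>X t \<omega>\<bar>)\<^sup>2 \<partial>Q) \<le> (\<integral>\<^sup>+\<omega>. (SUP n. (ennreal (Yn n \<omega>))\<^sup>2) \<partial>Q)"
    by (rule nn_integral_mono) (rule pw)
  also have "\<dots> = (SUP n. \<integral>\<^sup>+\<omega>. (ennreal (Yn n \<omega>))\<^sup>2 \<partial>Q)"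
    by (rule nn_integral_monotone_convergence_SUP[OF inc]) measurable
  also have "\<dots> \<le> 4 * (\<integral>\<^sup>+\<omega>. ennreal ((X T \<omega>)\<^sup>2) \<partial>Q)"
    by (rule SUP_least) (rule bound)
  finally show ?thesis .
qed



lemma sets_sigma_le:
  assumes "X \<subseteq> sets M" "\<Omega> \<in> sets M"
  shows "sets (sigma \<Omega> X) \<subseteq> sets M"
  using assms sets.sigma_sets_subset'[OF assms] by (auto simp: sets_measure_of_conv)

lemma sets_sigma_mono:
  assumes "X \<subseteq> Y" "Y \<subseteq> Pow \<Omega>"
  shows "sets (sigma \<Omega> X) \<subseteq> sets (sigma \<Omega> Y)"
  using assms sigma_sets_mono'[OF assms(1)] by (auto simp: sets_measure_of_conv)

lemma space_Fall: "space Fall = Omega" by (simp add: Fall_def space_measure_of_conv)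
lemma space_Fo: "space (Fo t) = Omega" by (simp add: Fo_def space_measure_of_conv)
lemma space_Ft: "space (Ft t) = Omega" by (simp add: Ft_def space_measure_of_conv)
lemma space_Fcompl: "space (Fcompl Q t) = Omega" by (simp add: Fcompl_def space_measure_of_conv)

lemma Fall_gen_sub: "{Xc r -` B \<inter> Omega | r B. 0 \<le> r \<and> B \<in> sets borel} \<subseteq> sets (Fall :: (real \<Rightarrow> 'e::polish_space) measure)"
  unfolding Fall_def by (subst sets_measure_of) (auto intro: sigma_sets.Basic)

lemma Omega_in_Fall: "Omega \<in> sets Fall"
  using sets.top[of Fall] by (simp add: space_Fall)

lemma sets_Fo_sub: "sets (Fo u) \<subseteq> sets Fall"
  unfolding Fo_def by (rule sets_sigma_le[OF _ Omega_in_Fall]) (use Fall_gen_sub in blast)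

lemma sets_Fo_Pow: "sets (Fo u) \<subseteq> Pow Omega"
  using sets.sets_into_space[of _ "Fo u"] by (auto simp: space_Fo)

lemma sets_Ft_sub: "sets (Ft t) \<subseteq> sets Fall"
  unfolding Ft_def
proof (rule sets_sigma_le[OF _ Omega_in_Fall])
  show "(\<Inter>u\<in>{t<..}. sets (Fo u)) \<subseteq> sets Fall"
    using sets_Fo_sub[of "t+1"] by auto
qed

lemma sets_Ft_mono: "t \<le> t' \<Longrightarrow> sets (Ft t) \<subseteq> sets (Ft t')"
  unfolding Ft_def
proof (rule sets_sigma_mono)
  assume "t \<le> t'"
  then show "(\<Inter>u\<in>{t<..}. sets (Fo u)) \<subseteq> (\<Inter>u\<in>{t'<..}. sets (Fo u))" by auto
  have "(\<Inter>u\<in>{t'<..}. sets (Fo u)) \<subseteq> sets (Fo (t'+1))" by auto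
  then show "(\<Inter>u\<in>{t'<..}. sets (Fo u)) \<subseteq> Pow Omega" using sets_Fo_Pow[of "t'+1"] by blast
qed

lemma Fcompl_sub:
  assumes "sets Q = sets Fall"
  shows "sets (Fcompl Q t) \<subseteq> sets (completion Q)"
  unfolding Fcompl_def
proof (rule sets_sigma_le)
  have sp: "space Q = Omega" using sets_eq_imp_space_eq[OF assms] by (simp add: space_Fall)
  show "Omega \<in> sets (completion Q)" using sets.top[of "completion Q"] sp by simp
  show "{A. A \<subseteq> Omega \<and> (\<exists>B\<in>sets (Ft t). \<exists>N\<in>null_sets Q. A - B \<union> (B - A) \<subseteq> N)} \<subseteq> sets (completion Q)"
  proof
    fix A assume "A \<in> {A. A \<subseteq> Omega \<and> (\<exists>B\<in>sets (Ft t). \<exists>N\<in>null_sets Q. A - B \<union> (B - A) \<subseteq> N)}"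
    then obtain B N where B: "B \<in> sets (Ft t)" and N: "N \<in> null_sets Q" and AB: "A - B \<union> (B - A) \<subseteq> N"
      by auto
    have BQ: "B \<in> sets Q" using B sets_Ft_sub assms by auto
    have NQ: "N \<in> sets Q" using N by auto
    show "A \<in> sets (completion Q)"
      by (rule sets_completionI[of A "B - N" "A \<inter> N" N]) (use AB N BQ NQ in auto)
  qed
qed

lemma Fcompl_mono:
  assumes "t \<le> u"
  shows "sets (Fcompl Q t) \<subseteq> sets (Fcompl Q u)"
  unfolding Fcompl_def
  by (rule sets_sigma_mono) (use sets_Ft_mono[OF assms] in auto)

lemma measurable_coarser:
  "f \<in> measurable M N \<Longrightarrow> sets N' \<subseteq> sets N \<Longrightarrow> space N' = space N \<Longrightarrow> f \<in> measurable M N'"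
  by (auto simp: measurable_def)

lemma prog_joint:
  fixes Y :: "real \<Rightarrow> (real \<Rightarrow> 'e::polish_space) \<Rightarrow> real" and P0 :: "(real \<Rightarrow> 'e) measure"
  assumes prog: "progressive Y" and P0: "sets P0 = sets Fall" and ab: "0 \<le> a" "a \<le> b"
  shows "(\<lambda>(\<omega>, r). indicator {a..b} r * Y r \<omega>) \<in> borel_measurable (P0 \<Otimes>\<^sub>M interval_measure V)"
proof -
  have sp: "space P0 = Omega" using sets_eq_imp_space_eq[OF P0] by (simp add: space_Fall)
  have jm: "(\<lambda>(r, \<omega>). Y r \<omega>) \<in> borel_measurable (restrict_space borel {0..b} \<Otimes>\<^sub>M Fo b)"
    using prog ab unfolding progressive_def by auto
  define R where "R = restrict_space (P0 \<Otimes>\<^sub>M borel) (Omega \<times> {a..b})"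
  have ssp: "space R = Omega \<times> {a..b}" unfolding R_def by (auto simp: space_restrict_space space_pair_measure sp)
  have m1: "snd \<in> measurable R (restrict_space borel {0..b})"
    unfolding R_def
    by (rule measurable_restrict_space2) (use ab in \<open>auto simp: space_restrict_space space_pair_measure sp intro: measurable_restrict_space1\<close>)
  have m2: "fst \<in> measurable R (Fo b)"
  proof (rule measurable_coarser)
    show "fst \<in> measurable R P0" unfolding R_def by (intro measurable_restrict_space1) simp
    show "sets (Fo b) \<subseteq> sets P0" using sets_Fo_sub P0 by auto
    show "space (Fo b) = space P0" by (simp add: space_Fo sp)
  qed
  have "(\<lambda>p. (snd p, fst p)) \<in> measurable R (restrict_space borel {0..b} \<Otimes>\<^sub>M Fo b)"
    using m1 m2 by (rule measurable_Pair)
  from measurable_comp[OF this jm]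
  have "(\<lambda>(\<omega>, r). Y r \<omega>) \<in> borel_measurable R" by (simp add: o_def case_prod_beta')
  then have "(\<lambda>x. if x \<in> Omega \<times> {a..b} then (\<lambda>(\<omega>, r). Y r \<omega>) x else 0) \<in> borel_measurable (P0 \<Otimes>\<^sub>M borel)"
  proof -
    have OP: "Omega \<in> sets P0" using sets.top[of P0] sp by simp
    have "Omega \<times> {a..b} \<inter> space (P0 \<Otimes>\<^sub>M borel) = Omega \<times> {a..b}" by (auto simp: space_pair_measure sp)
    moreover have "Omega \<times> {a..b} \<in> sets (P0 \<Otimes>\<^sub>M borel)" using OP by (intro pair_measureI) auto
    ultimately show "(\<lambda>(\<omega>, r). Y r \<omega>) \<in> borel_measurable R \<Longrightarrow> ?thesis"
      unfolding R_def by (subst (asm) measurable_restrict_space_iff) auto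
  qed
  then have "(\<lambda>(\<omega>, r). indicator {a..b} r * Y r \<omega>) \<in> borel_measurable (P0 \<Otimes>\<^sub>M borel)" (is "?f \<in> _")
    by (rule measurable_cong[THEN iffD1, rotated]) (auto simp: space_pair_measure sp indicator_def)
  then show ?thesis
  proof -
    have "sets (P0 \<Otimes>\<^sub>M borel) = sets (P0 \<Otimes>\<^sub>M interval_measure V)"
      by (rule sets_pair_measure_cong) auto
    then show "?f \<in> borel_measurable (P0 \<Otimes>\<^sub>M borel) \<Longrightarrow> ?thesis"
      using measurable_cong_sets[of "P0 \<Otimes>\<^sub>M borel" "P0 \<Otimes>\<^sub>M interval_measure V" borel borel] by auto
  qed
qed

lemma dVint_eq: "dVint V s u f = (\<integral>r. indicator {s..u} r * f r \<partial>interval_measure V)"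
  by (simp add: dVint_def set_lebesgue_integral_def)

lemma dV_rc:
  fixes f :: "real \<Rightarrow> real"
  assumes int: "integrable (interval_measure V) (\<lambda>r. indicator {s..T} r * f r)" and st: "s \<le> t" "t < T"
  shows "((\<lambda>u. dVint V s u f) \<longlongrightarrow> dVint V s t f) (at_right t)"
proof (rule tendsto_at_right_sequentially[OF st(2)])
  fix S :: "nat \<Rightarrow> real"
  assume S: "\<And>n. t < S n" "\<And>n. S n < T" "decseq S" "S \<longlonglongrightarrow> t"
  define g where "g r = indicator {s..T} r * f r" for r
  have gm[measurable]: "g \<in> borel_measurable (interval_measure V)" using int unfolding g_def by auto
  have eq: "indicator {s..u} r * f r = indicator {s..u} r * g r" if "u \<le> T" for u r
    using that by (auto simp: g_def indicator_def)
  have "(\<lambda>n. \<integral>r. indicator {s..S n} r * g r \<partial>interval_measure V) \<longlonglongrightarrow> (\<integral>r. indicator {s..t} r * g r \<partial>interval_measure V)"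
  proof (rule integral_dominated_convergence[where w="\<lambda>r. \<bar>g r\<bar>"])
    show "(\<lambda>r. indicator {s..t} r * g r) \<in> borel_measurable (interval_measure V)" by measurable
    show "(\<lambda>r. indicator {s..S n} r * g r) \<in> borel_measurable (interval_measure V)" for n by measurable
    show "integrable (interval_measure V) (\<lambda>r. \<bar>g r\<bar>)" using int unfolding g_def by auto
    show "AE r in interval_measure V. norm (indicator {s..S n} r * g r) \<le> \<bar>g r\<bar>" for n
      by (intro AE_I2) (auto simp: indicator_def)
    show "AE r in interval_measure V. (\<lambda>n. indicator {s..S n} r * g r) \<longlonglongrightarrow> indicator {s..t} r * g r"
    proof (intro AE_I2 tendsto_eventually)
      fix r :: real
      show "\<forall>\<^sub>F n in sequentially. indicator {s..S n} r * g r = indicator {s..t} r * g r"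
      proof (cases "r \<le> t")
        case True
        then show ?thesis proof (intro always_eventually allI)
          fix n have "t < S n" by (rule S(1))
          then show "indicator {s..S n} r * g r = indicator {s..t} r * g r" using True by (auto simp: indicator_def)
        qed
      next
        case False
        then have "\<forall>\<^sub>F n in sequentially. S n < r" using S(4) by (intro order_tendstoD(2)) auto
        then show ?thesis by (rule eventually_mono) (use False in \<open>auto simp: indicator_def\<close>)
      qed
    qed
  qed
  then show "(\<lambda>n. dVint V s (S n) f) \<longlonglongrightarrow> dVint V s t f"
  proof -
    have e1: "(\<lambda>r. indicator {s..S n} r * f r) = (\<lambda>r. indicator {s..S n} r * g r)" for n
      using S(2)[of n] by (auto simp: fun_eq_iff g_def indicator_def)
    have e2: "(\<lambda>r. indicator {s..t} r * f r) = (\<lambda>r. indicator {s..t} r * g r)"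
      using st(2) by (auto simp: fun_eq_iff g_def indicator_def)
    assume "(\<lambda>n. \<integral>r. indicator {s..S n} r * g r \<partial>interval_measure V) \<longlonglongrightarrow> (\<integral>r. indicator {s..t} r * g r \<partial>interval_measure V)"
    then show ?thesis unfolding dVint_eq e1 e2 .
  qed
qed



lemma integrator_facts:
  assumes V: "integrator T V"
  shows "mono V" "continuous_on UNIV V" "sigma_finite_measure (interval_measure V)"
    "\<And>a b. a \<le> b \<Longrightarrow> emeasure (interval_measure V) {a..b} = ennreal (V b - V a)"
proof -
  show mV: "mono V" and cV: "continuous_on UNIV V" using V by (auto simp: integrator_def)
  show "sigma_finite_measure (interval_measure V)"
    by (rule sigma_finite_interval_measure)
       (use mV cV in \<open>auto simp: mono_def continuous_on_eq_continuous_within intro: continuous_within_subset\<close>)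
  show "\<And>a b. a \<le> b \<Longrightarrow> emeasure (interval_measure V) {a..b} = ennreal (V b - V a)"
    by (rule emeasure_interval_measure_Icc) (use mV cV in \<open>auto simp: mono_def\<close>)
qed

lemma L_J:
  fixes Y :: "real \<Rightarrow> (real \<Rightarrow> 'e::polish_space) \<Rightarrow> real" and P0 :: "(real \<Rightarrow> 'e) measure"
  assumes V: "integrator T V" and prog: "progressive Y" and P0: "sets P0 = sets Fall"
    and s: "0 \<le> s" "s \<le> T"
    and L2: "(\<integral>\<^sup>+\<omega>. set_nn_integral (interval_measure V) {s..T} (\<lambda>r. ennreal ((Y r \<omega>)\<^sup>2)) \<partial>P0) < \<infinity>"
  defines "J \<equiv> \<lambda>\<omega>. \<integral>\<^sup>+r. ennreal \<bar>indicator {s..T} r * Y r \<omega>\<bar> \<partial>interval_measure V"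
  shows "J \<in> borel_measurable P0"
    and "(\<integral>\<^sup>+\<omega>. (J \<omega>)\<^sup>2 \<partial>P0) < \<infinity>"
    and "\<And>\<omega> t. s \<le> t \<Longrightarrow> t \<le> T \<Longrightarrow> ennreal \<bar>dVint V s t (\<lambda>r. Y r \<omega>)\<bar> \<le> J \<omega>"
    and "\<And>t. s \<le> t \<Longrightarrow> t \<le> T \<Longrightarrow> (\<lambda>\<omega>. dVint V s t (\<lambda>r. Y r \<omega>)) \<in> borel_measurable P0"
proof -
  interpret mu: sigma_finite_measure "interval_measure V" using integrator_facts(3)[OF V] .
  have sp: "space P0 = Omega" using sets_eq_imp_space_eq[OF P0] by (simp add: space_Fall)
  have jm[measurable]: "(\<lambda>(\<omega>, r). indicator {s..T} r * Y r \<omega>) \<in> borel_measurable (P0 \<Otimes>\<^sub>M interval_measure V)"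
    by (rule prog_joint[OF prog P0 s])
  show Jm: "J \<in> borel_measurable P0"
  proof -
    have "(\<lambda>(\<omega>, r). ennreal \<bar>indicator {s..T} r * Y r \<omega>\<bar>) \<in> borel_measurable (P0 \<Otimes>\<^sub>M interval_measure V)"
      using jm by measurable
    then show ?thesis unfolding J_def by (rule mu.borel_measurable_nn_integral[of "\<lambda>\<omega> r. ennreal \<bar>indicator {s..T} r * Y r \<omega>\<bar>", simplified])
  qed
  define c where "c = V T - V s"
  define K where "K \<omega> = (\<integral>\<^sup>+r. ennreal ((indicator {s..T} r * Y r \<omega>)\<^sup>2) \<partial>interval_measure V)" for \<omega>
  have Km: "K \<in> borel_measurable P0"
  proof -
    have "(\<lambda>(\<omega>, r). ennreal ((indicator {s..T} r * Y r \<omega>)\<^sup>2)) \<in> borel_measurable (P0 \<Otimes>\<^sub>M interval_measure V)"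
      using jm by measurable
    then show ?thesis unfolding K_def by (rule mu.borel_measurable_nn_integral[of "\<lambda>\<omega> r. ennreal ((indicator {s..T} r * Y r \<omega>)\<^sup>2)", simplified])
  qed
  have pw: "(J \<omega>)\<^sup>2 \<le> K \<omega> * ennreal c" if \<omega>: "\<omega> \<in> space P0" for \<omega>
  proof -
    define f where "f r = indicator {s..T} r * Y r \<omega>" for r
    have fm[measurable]: "f \<in> borel_measurable (interval_measure V)"
      unfolding f_def using measurable_Pair2[OF jm \<omega>] by simp
    have "(\<integral>\<^sup>+r. ennreal \<bar>f r\<bar> * indicator {s..T} r \<partial>interval_measure V)\<^sup>2
        \<le> (\<integral>\<^sup>+r. (ennreal \<bar>f r\<bar>)\<^sup>2 \<partial>interval_measure V) * (\<integral>\<^sup>+r. (indicator {s..T} r :: ennreal)\<^sup>2 \<partial>interval_measure V)"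
      by (rule Cauchy_Schwarz_nn_integral) measurable
    also have "(\<integral>\<^sup>+r. ennreal \<bar>f r\<bar> * indicator {s..T} r \<partial>interval_measure V) = J \<omega>"
      unfolding J_def f_def by (intro nn_integral_cong) (auto simp: indicator_def)
    also have "(\<integral>\<^sup>+r. (ennreal \<bar>f r\<bar>)\<^sup>2 \<partial>interval_measure V) = K \<omega>"
      unfolding K_def f_def by (intro nn_integral_cong) (metis abs_ge_zero ennreal_power power2_abs)
    also have "(\<integral>\<^sup>+r. (indicator {s..T} r :: ennreal)\<^sup>2 \<partial>interval_measure V) = emeasure (interval_measure V) {s..T}"
    proof -
      have "(\<integral>\<^sup>+r. (indicator {s..T} r :: ennreal)\<^sup>2 \<partial>interval_measure V) = (\<integral>\<^sup>+r. indicator {s..T} r \<partial>interval_measure V)"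
        by (intro nn_integral_cong) (simp add: indicator_def)
      also have "\<dots> = emeasure (interval_measure V) {s..T}" by (rule nn_integral_indicator) simp
      finally show ?thesis .
    qed
    also have "\<dots> = ennreal c" unfolding c_def using integrator_facts(4)[OF V s(2)] .
    finally show ?thesis .
  qed
  have "(\<integral>\<^sup>+\<omega>. (J \<omega>)\<^sup>2 \<partial>P0) \<le> (\<integral>\<^sup>+\<omega>. K \<omega> * ennreal c \<partial>P0)"
    by (rule nn_integral_mono) (rule pw)
  also have "\<dots> = (\<integral>\<^sup>+\<omega>. K \<omega> \<partial>P0) * ennreal c" by (rule nn_integral_multc[OF Km])
  also have "(\<integral>\<^sup>+\<omega>. K \<omega> \<partial>P0) = (\<integral>\<^sup>+\<omega>. set_nn_integral (interval_measure V) {s..T} (\<lambda>r. ennreal ((Y r \<omega>)\<^sup>2)) \<partial>P0)"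
    unfolding K_def by (intro nn_integral_cong) (auto simp: indicator_def power2_eq_square)
  finally show "(\<integral>\<^sup>+\<omega>. (J \<omega>)\<^sup>2 \<partial>P0) < \<infinity>"
    using L2 by (simp add: ennreal_mult_less_top top.not_eq_extremum le_less_trans)
  show "ennreal \<bar>dVint V s t (\<lambda>r. Y r \<omega>)\<bar> \<le> J \<omega>" if t: "s \<le> t" "t \<le> T" for \<omega> t
  proof (cases "integrable (interval_measure V) (\<lambda>r. indicator {s..t} r * Y r \<omega>)")
    case True
    have "ennreal \<bar>dVint V s t (\<lambda>r. Y r \<omega>)\<bar> \<le> (\<integral>\<^sup>+r. norm (indicator {s..t} r * Y r \<omega>) \<partial>interval_measure V)"
      unfolding dVint_eq using integral_norm_bound_ennreal[OF True] by simp
    also have "\<dots> \<le> J \<omega>" unfolding J_def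
      by (intro nn_integral_mono) (use t in \<open>auto simp: indicator_def\<close>)
    finally show ?thesis .
  next
    case False
    then show ?thesis unfolding dVint_eq by (simp add: not_integrable_integral_eq)
  qed
  show "(\<lambda>\<omega>. dVint V s t (\<lambda>r. Y r \<omega>)) \<in> borel_measurable P0" if t: "s \<le> t" "t \<le> T" for t
  proof -
    have "(\<lambda>(\<omega>, r). indicator {s..t} r * Y r \<omega>) \<in> borel_measurable (P0 \<Otimes>\<^sub>M interval_measure V)"
      by (rule prog_joint[OF prog P0]) (use s t in auto)
    then show ?thesis unfolding dVint_eq
      by (rule mu.borel_measurable_lebesgue_integral[of "\<lambda>\<omega> r. indicator {s..t} r * Y r \<omega>", simplified])
  qed
qed

lemma sup_meas:
  fixes f :: "real \<Rightarrow> 'a \<Rightarrow> real"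
  assumes meas: "\<And>t. t \<in> insert T ({s..<T} \<inter> \<rat>) \<Longrightarrow> f t \<in> borel_measurable M"
    and rc: "\<And>\<omega> t. \<omega> \<in> space M \<Longrightarrow> s \<le> t \<Longrightarrow> t < T \<Longrightarrow> ((\<lambda>u. f u \<omega>) \<longlongrightarrow> f t \<omega>) (at_right t)"
    and sT: "s \<le> T"
  shows "(\<lambda>\<omega>. SUP t\<in>{s..T}. ennreal \<bar>f t \<omega>\<bar>) \<in> borel_measurable M"
proof -
  define R where "R = insert T ({s..<T} \<inter> \<rat>)"
  have cR: "countable R" unfolding R_def by (auto intro: countable_rat)
  have eq: "(SUP t\<in>{s..T}. ennreal \<bar>f t \<omega>\<bar>) = (SUP t\<in>R. ennreal \<bar>f t \<omega>\<bar>)" if "\<omega> \<in> space M" for \<omega>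
  proof (rule antisym)
    show "(SUP t\<in>{s..T}. ennreal \<bar>f t \<omega>\<bar>) \<le> (SUP t\<in>R. ennreal \<bar>f t \<omega>\<bar>)"
      unfolding R_def by (rule sup_rc[where f="\<lambda>t. f t \<omega>"]) (use rc that in auto)
    show "(SUP t\<in>R. ennreal \<bar>f t \<omega>\<bar>) \<le> (SUP t\<in>{s..T}. ennreal \<bar>f t \<omega>\<bar>)"
      by (rule SUP_subset_mono) (use sT in \<open>auto simp: R_def\<close>)
  qed
  have "(\<lambda>\<omega>. SUP t\<in>R. ennreal \<bar>f t \<omega>\<bar>) \<in> borel_measurable M"
    using cR meas unfolding R_def[symmetric] by measurable
  then show ?thesis by (rule measurable_cong[THEN iffD1, rotated]) (simp add: eq)
qed

lemma ennreal_sq3: "((a::ennreal) + b + c)\<^sup>2 \<le> 3 * (a\<^sup>2 + b\<^sup>2 + c\<^sup>2)"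
proof (cases "a = top \<or> b = top \<or> c = top")
  case True
  then show ?thesis by (auto simp: power2_eq_square ennreal_mult_top top_add ennreal_top_mult)
next
  case False
  then obtain x y z where xyz: "a = ennreal x" "b = ennreal y" "c = ennreal z" "0 \<le> x" "0 \<le> y" "0 \<le> z"
    by (metis ennreal_cases)
  have "(x + y + z)\<^sup>2 \<le> 3 * (x\<^sup>2 + y\<^sup>2 + z\<^sup>2)"
  proof -
    have "0 \<le> (x - y)\<^sup>2 + (x - z)\<^sup>2 + (y - z)\<^sup>2" by simp
    then show ?thesis by (simp add: power2_eq_square algebra_simps)
  qed
  then have "ennreal ((x + y + z)\<^sup>2) \<le> ennreal (3 * (x\<^sup>2 + y\<^sup>2 + z\<^sup>2))" by (rule ennreal_leI)
  moreover have "(a + b + c)\<^sup>2 = ennreal ((x + y + z)\<^sup>2)"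
  proof -
    have e: "a + b + c = ennreal (x + y + z)" using xyz by (simp add: ennreal_plus)
    show ?thesis unfolding e by (rule ennreal_power) (use xyz in simp)
  qed
  moreover have "3 * (a\<^sup>2 + b\<^sup>2 + c\<^sup>2) = ennreal (3 * (x\<^sup>2 + y\<^sup>2 + z\<^sup>2))"
    using xyz by (simp add: ennreal_power ennreal_mult ennreal_plus)
  ultimately show ?thesis by simp
qed

lemma core:
  fixes P0 :: "(real \<Rightarrow> 'e::polish_space) measure" and Ms \<Phi> A\<Phi> :: "real \<Rightarrow> (real \<Rightarrow> 'e) \<Rightarrow> real"
    and s T c :: real and V :: "real \<Rightarrow> real"
  assumes V: "integrator T V" and prob: "prob_space P0" and P0: "sets P0 = sets Fall"
    and s: "0 \<le> s" "s \<le> T"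
    and progA: "progressive A\<Phi>"
    and L2: "(\<integral>\<^sup>+\<omega>. set_nn_integral (interval_measure V) {s..T} (\<lambda>r. ennreal ((A\<Phi> r \<omega>)\<^sup>2)) \<partial>P0) < \<infinity>"
    and finA: "\<And>\<omega>. \<omega> \<in> Omega \<Longrightarrow> dVint_abs V 0 T (\<lambda>r. A\<Phi> r \<omega>) < \<infinity>"
    and int\<Phi>: "\<And>t. s \<le> t \<Longrightarrow> integrable P0 (\<Phi> t)"
    and int\<Phi>2: "\<And>t. s \<le> t \<Longrightarrow> integrable P0 (\<lambda>\<omega>. (\<Phi> t \<omega>)\<^sup>2)"
    and cm: "cadlag_martingale (completion P0) (Fcompl P0) Ms"
    and z: "\<And>t \<omega>. t \<in> {0..s} \<Longrightarrow> \<omega> \<in> Omega \<Longrightarrow> Ms t \<omega> = 0"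
    and ae: "\<And>t u. s \<le> t \<Longrightarrow> t \<le> u \<Longrightarrow> (AE \<omega> in P0. MPhi V \<Phi> A\<Phi> t u \<omega> = Ms u \<omega> - Ms t \<omega>)"
  shows "\<And>t. s \<le> t \<Longrightarrow> t \<le> T \<Longrightarrow> integrable (completion P0) (\<lambda>\<omega>. (Ms t \<omega>)\<^sup>2)"
    and "(\<integral>\<^sup>+\<omega>. (SUP t\<in>{s..T}. ennreal \<bar>Ms t \<omega>\<bar>)\<^sup>2 \<partial>completion P0) < \<infinity>"
    and "(\<lambda>\<omega>. SUP t\<in>{s..T}. ennreal \<bar>c + dVint V s (max s t) (\<lambda>r. A\<Phi> r \<omega>) + Ms t \<omega>\<bar>) \<in> borel_measurable (completion P0)"
    and "(\<integral>\<^sup>+\<omega>. (SUP t\<in>{s..T}. ennreal \<bar>c + dVint V s (max s t) (\<lambda>r. A\<Phi> r \<omega>) + Ms t \<omega>\<bar>)\<^sup>2 \<partial>completion P0) < \<infinity>"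
proof -
  let ?Q = "completion P0"
  interpret P0p: prob_space P0 by (rule prob)
  have Qprob: "prob_space ?Q" by (rule P0p.prob_space_completion)
  have spP0: "space P0 = Omega" using sets_eq_imp_space_eq[OF P0] by (simp add: space_Fall)
  have spQ: "space ?Q = Omega" by (simp add: spP0)
  have cadl: "\<And>\<omega>. \<omega> \<in> Omega \<Longrightarrow> cadlag_on_Rplus (\<lambda>t. Ms t \<omega>)"
    and measG: "\<And>t. 0 \<le> t \<Longrightarrow> Ms t \<in> borel_measurable (Fcompl P0 t)"
    and intM: "\<And>t. 0 \<le> t \<Longrightarrow> integrable ?Q (Ms t)"
    and mart: "\<And>t u A. 0 \<le> t \<Longrightarrow> t \<le> u \<Longrightarrow> A \<in> sets (Fcompl P0 t) \<Longrightarrow>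
        set_lebesgue_integral ?Q A (Ms u) = set_lebesgue_integral ?Q A (Ms t)"
    using cm unfolding cadlag_martingale_def by (auto simp: spQ spP0)
  have subG: "\<And>t. sets (Fcompl P0 t) \<subseteq> sets ?Q" using Fcompl_sub[OF P0] .
  have spG: "\<And>t. space (Fcompl P0 t) = space ?Q" by (simp add: space_Fcompl spP0)
  have MsQ[measurable]: "Ms t \<in> borel_measurable ?Q" if "0 \<le> t" for t
    using measurable_from_subalg[OF _ measG[OF that]] subG spG by (auto simp: subalgebra_def)
  have rcM: "\<And>\<omega> t. \<omega> \<in> Omega \<Longrightarrow> 0 \<le> t \<Longrightarrow> ((\<lambda>u. Ms u \<omega>) \<longlongrightarrow> Ms t \<omega>) (at_right t)"
    using cadl unfolding cadlag_on_Rplus_def by auto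
  define J where "J = (\<lambda>\<omega>. \<integral>\<^sup>+r. ennreal \<bar>indicator {s..T} r * A\<Phi> r \<omega>\<bar> \<partial>interval_measure V)"
  note JJ = L_J[OF V progA P0 s L2, folded J_def]
  have Jm[measurable]: "J \<in> borel_measurable ?Q" using JJ(1) by (rule measurable_completion)
  have J2: "(\<integral>\<^sup>+\<omega>. (J \<omega>)\<^sup>2 \<partial>?Q) < \<infinity>" using JJ(2) by (simp add: nn_integral_completion J_def)
  have DJ: "\<And>\<omega> t. s \<le> t \<Longrightarrow> t \<le> T \<Longrightarrow> ennreal \<bar>dVint V s t (\<lambda>r. A\<Phi> r \<omega>)\<bar> \<le> J \<omega>" using JJ(3) by (simp add: J_def)
  have Dm[measurable]: "(\<lambda>\<omega>. dVint V s t (\<lambda>r. A\<Phi> r \<omega>)) \<in> borel_measurable ?Q" if "s \<le> t" "t \<le> T" for t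
    using JJ(4)[OF that] by (rule measurable_completion)
  have D2: "integrable ?Q (\<lambda>\<omega>. (dVint V s t (\<lambda>r. A\<Phi> r \<omega>))\<^sup>2)" if t: "s \<le> t" "t \<le> T" for t
  proof (subst integrable_iff_bounded, intro conjI)
    show "(\<lambda>\<omega>. (dVint V s t (\<lambda>r. A\<Phi> r \<omega>))\<^sup>2) \<in> borel_measurable ?Q" using t by measurable
    have "(\<integral>\<^sup>+\<omega>. ennreal (norm ((dVint V s t (\<lambda>r. A\<Phi> r \<omega>))\<^sup>2)) \<partial>?Q) \<le> (\<integral>\<^sup>+\<omega>. (J \<omega>)\<^sup>2 \<partial>?Q)"
    proof (rule nn_integral_mono)
      fix \<omega>
      have "ennreal (norm ((dVint V s t (\<lambda>r. A\<Phi> r \<omega>))\<^sup>2)) = (ennreal \<bar>dVint V s t (\<lambda>r. A\<Phi> r \<omega>)\<bar>)\<^sup>2"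
        by (simp add: ennreal_power)
      also have "\<dots> \<le> (J \<omega>)\<^sup>2" by (intro power_mono DJ t) simp
      finally show "ennreal (norm ((dVint V s t (\<lambda>r. A\<Phi> r \<omega>))\<^sup>2)) \<le> (J \<omega>)\<^sup>2" .
    qed
    then show "(\<integral>\<^sup>+\<omega>. ennreal (norm ((dVint V s t (\<lambda>r. A\<Phi> r \<omega>))\<^sup>2)) \<partial>?Q) < \<infinity>"
      using J2 by (rule le_less_trans)
  qed
  have \<Phi>2Q: "integrable ?Q (\<lambda>\<omega>. (\<Phi> t \<omega>)\<^sup>2)" if "s \<le> t" for t
    using int\<Phi>2[OF that] by (subst integrable_completion) (auto intro: borel_measurable_integrable)
  have \<Phi>Q[measurable]: "\<Phi> t \<in> borel_measurable ?Q" if "s \<le> t" for t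
    using int\<Phi>[OF that] by (intro measurable_completion borel_measurable_integrable)
  have AEM: "AE \<omega> in ?Q. Ms t \<omega> = \<Phi> t \<omega> - \<Phi> s \<omega> - dVint V s t (\<lambda>r. A\<Phi> r \<omega>)" if t: "s \<le> t" for t
  proof -
    have "AE \<omega> in ?Q. MPhi V \<Phi> A\<Phi> s t \<omega> = Ms t \<omega> - Ms s \<omega>"
      by (rule AE_completion) (rule ae, use t in auto)
    moreover have "AE \<omega> in ?Q. \<omega> \<in> Omega" using AE_space[of ?Q] by (simp add: spP0)
    ultimately show ?thesis
      by eventually_elim (use s in \<open>auto simp: MPhi_def z\<close>)
  qed
  show int_i: "integrable ?Q (\<lambda>\<omega>. (Ms t \<omega>)\<^sup>2)" if t: "s \<le> t" "t \<le> T" for t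
  proof -
    have "integrable ?Q (\<lambda>\<omega>. (\<Phi> t \<omega> - \<Phi> s \<omega> - dVint V s t (\<lambda>r. A\<Phi> r \<omega>))\<^sup>2)"
    proof (rule Bochner_Integration.integrable_bound)
      show "integrable ?Q (\<lambda>\<omega>. 3 * ((\<Phi> t \<omega>)\<^sup>2 + (\<Phi> s \<omega>)\<^sup>2 + (dVint V s t (\<lambda>r. A\<Phi> r \<omega>))\<^sup>2))"
        using \<Phi>2Q[of t] \<Phi>2Q[of s] D2[OF t] t by (intro integrable_mult_right Bochner_Integration.integrable_add) auto
      show "(\<lambda>\<omega>. (\<Phi> t \<omega> - \<Phi> s \<omega> - dVint V s t (\<lambda>r. A\<Phi> r \<omega>))\<^sup>2) \<in> borel_measurable ?Q"
        using t by measurable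
      show "AE \<omega> in ?Q. norm ((\<Phi> t \<omega> - \<Phi> s \<omega> - dVint V s t (\<lambda>r. A\<Phi> r \<omega>))\<^sup>2)
          \<le> norm (3 * ((\<Phi> t \<omega>)\<^sup>2 + (\<Phi> s \<omega>)\<^sup>2 + (dVint V s t (\<lambda>r. A\<Phi> r \<omega>))\<^sup>2))"
      proof (intro AE_I2)
        fix \<omega>
        show "norm ((\<Phi> t \<omega> - \<Phi> s \<omega> - dVint V s t (\<lambda>r. A\<Phi> r \<omega>))\<^sup>2)
          \<le> norm (3 * ((\<Phi> t \<omega>)\<^sup>2 + (\<Phi> s \<omega>)\<^sup>2 + (dVint V s t (\<lambda>r. A\<Phi> r \<omega>))\<^sup>2))"
        proof -
          fix a b d :: real
          have key: "(a - b - d)\<^sup>2 \<le> 3 * (a\<^sup>2 + b\<^sup>2 + d\<^sup>2)" for a b d :: real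
          proof -
            have "0 \<le> (a + b)\<^sup>2 + (a + d)\<^sup>2 + (b - d)\<^sup>2" by simp
            then show ?thesis by (simp add: power2_eq_square algebra_simps)
          qed
          show ?thesis using key[of "\<Phi> t \<omega>" "\<Phi> s \<omega>" "dVint V s t (\<lambda>r. A\<Phi> r \<omega>)"] by simp
        qed
      qed
    qed
    moreover have "integrable ?Q (\<lambda>\<omega>. (Ms t \<omega>)\<^sup>2) \<longleftrightarrow> integrable ?Q (\<lambda>\<omega>. (\<Phi> t \<omega> - \<Phi> s \<omega> - dVint V s t (\<lambda>r. A\<Phi> r \<omega>))\<^sup>2)"
    proof (rule integrable_cong_AE)
      have [measurable]: "Ms t \<in> borel_measurable ?Q" using s t by (intro MsQ) auto
      show "(\<lambda>\<omega>. (Ms t \<omega>)\<^sup>2) \<in> borel_measurable ?Q" by measurable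
      show "(\<lambda>\<omega>. (\<Phi> t \<omega> - \<Phi> s \<omega> - dVint V s t (\<lambda>r. A\<Phi> r \<omega>))\<^sup>2) \<in> borel_measurable ?Q" using t s by measurable
      show "AE \<omega> in ?Q. (Ms t \<omega>)\<^sup>2 = (\<Phi> t \<omega> - \<Phi> s \<omega> - dVint V s t (\<lambda>r. A\<Phi> r \<omega>))\<^sup>2"
        using AEM[OF t(1)] by eventually_elim simp
    qed
    ultimately show ?thesis by simp
  qed
  have doob: "(\<integral>\<^sup>+\<omega>. (SUP t\<in>{s..T}. ennreal \<bar>Ms t \<omega>\<bar>)\<^sup>2 \<partial>?Q) \<le> 4 * (\<integral>\<^sup>+\<omega>. ennreal ((Ms T \<omega>)\<^sup>2) \<partial>?Q)"
  proof (rule doob_cadlag[where G="Fcompl P0"])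
    show "prob_space ?Q" by (rule Qprob)
    show "s \<le> T" by (rule s(2))
    show "sets (Fcompl P0 t) \<subseteq> sets ?Q" for t by (rule subG)
    show "space (Fcompl P0 t) = space ?Q" for t by (rule spG)
    show "t \<le> u \<Longrightarrow> sets (Fcompl P0 t) \<subseteq> sets (Fcompl P0 u)" for t u by (rule Fcompl_mono)
    show "s \<le> t \<Longrightarrow> t \<le> T \<Longrightarrow> Ms t \<in> borel_measurable (Fcompl P0 t)" for t using s by (intro measG) auto
    show "s \<le> t \<Longrightarrow> t \<le> T \<Longrightarrow> integrable ?Q (Ms t)" for t using s by (intro intM) auto
    show "s \<le> t \<Longrightarrow> t \<le> T \<Longrightarrow> integrable ?Q (\<lambda>\<omega>. (Ms t \<omega>)\<^sup>2)" for t by (rule int_i)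
    show "(\<integral>\<omega>. indicator A \<omega> * Ms T \<omega> \<partial>?Q) = (\<integral>\<omega>. indicator A \<omega> * Ms t \<omega> \<partial>?Q)"
      if "s \<le> t" "t \<le> T" "A \<in> sets (Fcompl P0 t)" for t A
      using mart[of t T A] that s by (simp add: set_lebesgue_integral_def)
    show "((\<lambda>u. Ms u \<omega>) \<longlongrightarrow> Ms t \<omega>) (at_right t)" if "\<omega> \<in> space ?Q" "s \<le> t" "t < T" for \<omega> t
      using that s by (intro rcM) (auto simp: spP0)
  qed
  have fin_T: "(\<integral>\<^sup>+\<omega>. ennreal ((Ms T \<omega>)\<^sup>2) \<partial>?Q) < \<infinity>"
  proof -
    have "integrable ?Q (\<lambda>\<omega>. (Ms T \<omega>)\<^sup>2)" using s by (intro int_i) auto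
    then have "(\<integral>\<^sup>+\<omega>. ennreal (norm ((Ms T \<omega>)\<^sup>2)) \<partial>?Q) < \<infinity>" by (simp add: integrable_iff_bounded)
    then show ?thesis by simp
  qed
  show Msup_fin: "(\<integral>\<^sup>+\<omega>. (SUP t\<in>{s..T}. ennreal \<bar>Ms t \<omega>\<bar>)\<^sup>2 \<partial>?Q) < \<infinity>"
    using doob fin_T by (simp add: ennreal_mult_less_top le_less_trans)
  have intA: "integrable (interval_measure V) (\<lambda>r. indicator {s..T} r * A\<Phi> r \<omega>)" if \<omega>: "\<omega> \<in> Omega" for \<omega>
  proof (subst integrable_iff_bounded, intro conjI)
    show "(\<lambda>r. indicator {s..T} r * A\<Phi> r \<omega>) \<in> borel_measurable (interval_measure V)"
      using measurable_Pair2[OF prog_joint[OF progA P0 s, of V], of \<omega>] \<omega> by (simp add: spP0)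
    have "(\<integral>\<^sup>+r. ennreal (norm (indicator {s..T} r * A\<Phi> r \<omega>)) \<partial>interval_measure V) \<le> dVint_abs V 0 T (\<lambda>r. A\<Phi> r \<omega>)"
      unfolding dVint_abs_def by (intro nn_integral_mono) (use s in \<open>auto simp: indicator_def\<close>)
    then show "(\<integral>\<^sup>+r. ennreal (norm (indicator {s..T} r * A\<Phi> r \<omega>)) \<partial>interval_measure V) < \<infinity>"
      using finA[OF \<omega>] by (rule le_less_trans)
  qed
  define \<Phi>s where "\<Phi>s t \<omega> = c + dVint V s (max s t) (\<lambda>r. A\<Phi> r \<omega>) + Ms t \<omega>" for t \<omega>
  have rc\<Phi>s: "((\<lambda>u. \<Phi>s u \<omega>) \<longlongrightarrow> \<Phi>s t \<omega>) (at_right t)" if "\<omega> \<in> space ?Q" "s \<le> t" "t < T" for \<omega> t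
  proof -
    have \<omega>: "\<omega> \<in> Omega" using that by (simp add: spP0)
    have "((\<lambda>u. c + dVint V s u (\<lambda>r. A\<Phi> r \<omega>) + Ms u \<omega>) \<longlongrightarrow> c + dVint V s t (\<lambda>r. A\<Phi> r \<omega>) + Ms t \<omega>) (at_right t)"
      using that s by (intro tendsto_add tendsto_const dV_rc[OF intA[OF \<omega>]] rcM[OF \<omega>]) auto
    moreover have "\<forall>\<^sub>F u in at_right t. c + dVint V s u (\<lambda>r. A\<Phi> r \<omega>) + Ms u \<omega> = \<Phi>s u \<omega>"
      using eventually_at_right_less[of t] by eventually_elim (use that in \<open>auto simp: \<Phi>s_def max_def\<close>)
    ultimately show ?thesis using that by (subst (asm) tendsto_cong) (auto simp: \<Phi>s_def max_def)
  qed
  show S_meas: "(\<lambda>\<omega>. SUP t\<in>{s..T}. ennreal \<bar>c + dVint V s (max s t) (\<lambda>r. A\<Phi> r \<omega>) + Ms t \<omega>\<bar>) \<in> borel_measurable ?Q"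
    unfolding \<Phi>s_def[symmetric]
  proof (rule sup_meas)
    show "\<Phi>s t \<in> borel_measurable ?Q" if "t \<in> insert T ({s..<T} \<inter> \<rat>)" for t
    proof -
      have t: "s \<le> t" "t \<le> T" "0 \<le> t" using that s by auto
      have [measurable]: "Ms t \<in> borel_measurable ?Q" using t by (intro MsQ)
      have "\<Phi>s t = (\<lambda>\<omega>. c + dVint V s t (\<lambda>r. A\<Phi> r \<omega>) + Ms t \<omega>)" using t by (auto simp: \<Phi>s_def max_def fun_eq_iff)
      also have "\<dots> \<in> borel_measurable ?Q" using t by measurable
      finally show ?thesis .
    qed
  qed (use rc\<Phi>s s in auto)
  have Msup_meas[measurable]: "(\<lambda>\<omega>. SUP t\<in>{s..T}. ennreal \<bar>Ms t \<omega>\<bar>) \<in> borel_measurable ?Q"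
  proof (rule sup_meas)
    show "Ms t \<in> borel_measurable ?Q" if "t \<in> insert T ({s..<T} \<inter> \<rat>)" for t
      using that s by (intro MsQ) auto
  qed (use rcM s in \<open>auto simp: spP0\<close>)
  define Msup where "Msup = (\<lambda>\<omega>. SUP t\<in>{s..T}. ennreal \<bar>Ms t \<omega>\<bar>)"
  define S where "S = (\<lambda>\<omega>. SUP t\<in>{s..T}. ennreal \<bar>c + dVint V s (max s t) (\<lambda>r. A\<Phi> r \<omega>) + Ms t \<omega>\<bar>)"
  have pw: "S \<omega> \<le> ennreal \<bar>c\<bar> + J \<omega> + Msup \<omega>" for \<omega>
    unfolding S_def
  proof (rule SUP_least)
    fix t assume t: "t \<in> {s..T}"
    have "ennreal \<bar>c + dVint V s (max s t) (\<lambda>r. A\<Phi> r \<omega>) + Ms t \<omega>\<bar>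
        \<le> ennreal (\<bar>c\<bar> + \<bar>dVint V s t (\<lambda>r. A\<Phi> r \<omega>)\<bar> + \<bar>Ms t \<omega>\<bar>)"
      using t by (intro ennreal_leI) (auto simp: max_def abs_triangle_ineq intro: order_trans[OF abs_triangle_ineq])
    also have "\<dots> = ennreal \<bar>c\<bar> + ennreal \<bar>dVint V s t (\<lambda>r. A\<Phi> r \<omega>)\<bar> + ennreal \<bar>Ms t \<omega>\<bar>"
      by (simp add: ennreal_plus)
    also have "\<dots> \<le> ennreal \<bar>c\<bar> + J \<omega> + Msup \<omega>"
      unfolding Msup_def using t by (intro add_mono order_refl DJ SUP_upper) auto
    finally show "ennreal \<bar>c + dVint V s (max s t) (\<lambda>r. A\<Phi> r \<omega>) + Ms t \<omega>\<bar> \<le> ennreal \<bar>c\<bar> + J \<omega> + Msup \<omega>" .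
  qed
  have "(\<integral>\<^sup>+\<omega>. (S \<omega>)\<^sup>2 \<partial>?Q) \<le> (\<integral>\<^sup>+\<omega>. 3 * ((ennreal \<bar>c\<bar>)\<^sup>2 + (J \<omega>)\<^sup>2 + (Msup \<omega>)\<^sup>2) \<partial>?Q)"
  proof (rule nn_integral_mono)
    fix \<omega>
    have "(S \<omega>)\<^sup>2 \<le> (ennreal \<bar>c\<bar> + J \<omega> + Msup \<omega>)\<^sup>2" by (intro power_mono pw) simp
    also have "\<dots> \<le> 3 * ((ennreal \<bar>c\<bar>)\<^sup>2 + (J \<omega>)\<^sup>2 + (Msup \<omega>)\<^sup>2)" by (rule ennreal_sq3)
    finally show "(S \<omega>)\<^sup>2 \<le> 3 * ((ennreal \<bar>c\<bar>)\<^sup>2 + (J \<omega>)\<^sup>2 + (Msup \<omega>)\<^sup>2)" .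
  qed
  also have "\<dots> = 3 * ((\<integral>\<^sup>+\<omega>. (ennreal \<bar>c\<bar>)\<^sup>2 \<partial>?Q) + (\<integral>\<^sup>+\<omega>. (J \<omega>)\<^sup>2 \<partial>?Q) + (\<integral>\<^sup>+\<omega>. (Msup \<omega>)\<^sup>2 \<partial>?Q))"
    unfolding Msup_def by (simp add: nn_integral_add nn_integral_cmult mult.assoc)
  also have "\<dots> < \<infinity>"
  proof -
    have "(\<integral>\<^sup>+\<omega>. (ennreal \<bar>c\<bar>)\<^sup>2 \<partial>?Q) = (ennreal \<bar>c\<bar>)\<^sup>2"
      using prob_space.emeasure_space_1[OF Qprob] by simp
    then have "(\<integral>\<^sup>+\<omega>. (ennreal \<bar>c\<bar>)\<^sup>2 \<partial>?Q) < \<infinity>" by (simp add: power_less_top_ennreal)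
    moreover have "(\<integral>\<^sup>+\<omega>. (Msup \<omega>)\<^sup>2 \<partial>?Q) < \<infinity>" using Msup_fin unfolding Msup_def .
    ultimately show ?thesis using J2 by (simp add: ennreal_mult_less_top)
  qed
  finally show "(\<integral>\<^sup>+\<omega>. (SUP t\<in>{s..T}. ennreal \<bar>c + dVint V s (max s t) (\<lambda>r. A\<Phi> r \<omega>) + Ms t \<omega>\<bar>)\<^sup>2 \<partial>?Q) < \<infinity>"
    unfolding S_def .
qed



lemma sq_int_proc:
  fixes P0 :: "(real \<Rightarrow> 'e::polish_space) measure" and Ms :: "real \<Rightarrow> (real \<Rightarrow> 'e) \<Rightarrow> real"
    and M :: "real \<Rightarrow> real \<Rightarrow> (real \<Rightarrow> 'e) \<Rightarrow> real"
  assumes prob: "prob_space P0" and P0: "sets P0 = sets Fall" and s: "0 \<le> s"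
    and cm: "cadlag_martingale (completion P0) (Fcompl P0) Ms"
    and z: "\<And>t \<omega>. t \<in> {0..s} \<Longrightarrow> \<omega> \<in> Omega \<Longrightarrow> Ms t \<omega> = 0"
    and ae: "\<And>t u. s \<le> t \<Longrightarrow> t \<le> u \<Longrightarrow> (AE \<omega> in P0. M t u \<omega> = Ms u \<omega> - Ms t \<omega>)"
    and Mz: "\<And>a b \<omega>. T \<le> a \<Longrightarrow> a \<le> b \<Longrightarrow> \<omega> \<in> Omega \<Longrightarrow> M a b \<omega> = 0"
    and L2: "s \<le> T \<Longrightarrow> (\<forall>t. s \<le> t \<and> t \<le> T \<longrightarrow> integrable (completion P0) (\<lambda>\<omega>. (Ms t \<omega>)\<^sup>2)) \<and>
       (\<integral>\<^sup>+\<omega>. (SUP t\<in>{s..T}. ennreal \<bar>Ms t \<omega>\<bar>)\<^sup>2 \<partial>completion P0) < \<infinity>"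
  shows "square_integrable_proc (completion P0) Ms"
proof -
  let ?Q = "completion P0"
  have spP0: "space P0 = Omega" using sets_eq_imp_space_eq[OF P0] by (simp add: space_Fall)
  have measG: "\<And>t. 0 \<le> t \<Longrightarrow> Ms t \<in> borel_measurable (Fcompl P0 t)"
    using cm unfolding cadlag_martingale_def by auto
  have subG: "\<And>t. sets (Fcompl P0 t) \<subseteq> sets ?Q" using Fcompl_sub[OF P0] .
  have spG: "\<And>t. space (Fcompl P0 t) = space ?Q" by (simp add: space_Fcompl spP0)
  have MsQ[measurable]: "Ms t \<in> borel_measurable ?Q" if "0 \<le> t" for t
    using measurable_from_subalg[OF _ measG[OF that]] subG spG by (auto simp: subalgebra_def)
  have AEsp: "AE \<omega> in ?Q. \<omega> \<in> Omega" using AE_space[of ?Q] by (simp add: spP0)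
  show ?thesis
  proof (cases "s \<le> T")
    case False
    have zero: "AE \<omega> in ?Q. (Ms t \<omega>)\<^sup>2 = 0" if t: "0 \<le> t" for t
    proof (cases "t \<le> s")
      case True
      show ?thesis using AEsp by eventually_elim (use t True in \<open>auto simp: z\<close>)
    next
      case ts: False
      have "AE \<omega> in ?Q. M s t \<omega> = Ms t \<omega> - Ms s \<omega>" by (rule AE_completion) (rule ae, use ts in auto)
      then show ?thesis using AEsp by eventually_elim (use False ts s in \<open>auto simp: z Mz\<close>)
    qed
    have "integrable ?Q (\<lambda>\<omega>. (Ms t \<omega>)\<^sup>2) \<and> (\<integral>\<omega>. (Ms t \<omega>)\<^sup>2 \<partial>?Q) \<le> 0" if t: "0 \<le> t" for t
    proof
      show "integrable ?Q (\<lambda>\<omega>. (Ms t \<omega>)\<^sup>2)"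
        using integrable_cong_AE[of "\<lambda>\<omega>. (Ms t \<omega>)\<^sup>2" ?Q "\<lambda>_. 0"] zero[OF t] t by simp
      show "(\<integral>\<omega>. (Ms t \<omega>)\<^sup>2 \<partial>?Q) \<le> 0"
        using integral_cong_AE[of "\<lambda>\<omega>. (Ms t \<omega>)\<^sup>2" ?Q "\<lambda>_. 0"] zero[OF t] t by simp
    qed
    then show ?thesis unfolding square_integrable_proc_def by blast
  next
    case True
    from L2[OF True] have intI: "\<And>t. s \<le> t \<Longrightarrow> t \<le> T \<Longrightarrow> integrable ?Q (\<lambda>\<omega>. (Ms t \<omega>)\<^sup>2)"
      and fin: "(\<integral>\<^sup>+\<omega>. (SUP t\<in>{s..T}. ennreal \<bar>Ms t \<omega>\<bar>)\<^sup>2 \<partial>?Q) < \<infinity>" by auto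
    define C where "C = enn2real (\<integral>\<^sup>+\<omega>. (SUP t\<in>{s..T}. ennreal \<bar>Ms t \<omega>\<bar>)\<^sup>2 \<partial>?Q)"
    have C0: "0 \<le> C" by (simp add: C_def)
    have inner: "integrable ?Q (\<lambda>\<omega>. (Ms t \<omega>)\<^sup>2) \<and> (\<integral>\<omega>. (Ms t \<omega>)\<^sup>2 \<partial>?Q) \<le> C" if t: "s \<le> t" "t \<le> T" for t
    proof
      show "integrable ?Q (\<lambda>\<omega>. (Ms t \<omega>)\<^sup>2)" by (rule intI[OF t])
      have t0: "0 \<le> t" using s t by auto
      have "(\<integral>\<omega>. (Ms t \<omega>)\<^sup>2 \<partial>?Q) = enn2real (\<integral>\<^sup>+\<omega>. ennreal ((Ms t \<omega>)\<^sup>2) \<partial>?Q)"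
        by (rule integral_eq_nn_integral) (use t0 in auto)
      also have "\<dots> \<le> C" unfolding C_def
      proof (rule enn2real_mono)
        show "(\<integral>\<^sup>+\<omega>. (SUP t\<in>{s..T}. ennreal \<bar>Ms t \<omega>\<bar>)\<^sup>2 \<partial>?Q) < \<top>" using fin by simp
        show "(\<integral>\<^sup>+\<omega>. ennreal ((Ms t \<omega>)\<^sup>2) \<partial>?Q) \<le> (\<integral>\<^sup>+\<omega>. (SUP t\<in>{s..T}. ennreal \<bar>Ms t \<omega>\<bar>)\<^sup>2 \<partial>?Q)"
        proof (rule nn_integral_mono)
        fix \<omega>
        have "ennreal ((Ms t \<omega>)\<^sup>2) = (ennreal \<bar>Ms t \<omega>\<bar>)\<^sup>2" by (simp add: ennreal_power)
        also have "\<dots> \<le> (SUP t\<in>{s..T}. ennreal \<bar>Ms t \<omega>\<bar>)\<^sup>2" by (intro power_mono SUP_upper) (use t in auto)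
        finally show "ennreal ((Ms t \<omega>)\<^sup>2) \<le> (SUP t\<in>{s..T}. ennreal \<bar>Ms t \<omega>\<bar>)\<^sup>2" .
        qed
      qed
      finally show "(\<integral>\<omega>. (Ms t \<omega>)\<^sup>2 \<partial>?Q) \<le> C" .
    qed
    have "integrable ?Q (\<lambda>\<omega>. (Ms t \<omega>)\<^sup>2) \<and> (\<integral>\<omega>. (Ms t \<omega>)\<^sup>2 \<partial>?Q) \<le> C" if t: "0 \<le> t" for t
    proof (cases "t < s")
      case True
      have zero: "AE \<omega> in ?Q. (Ms t \<omega>)\<^sup>2 = 0" using AEsp by eventually_elim (use t True in \<open>auto simp: z\<close>)
      show ?thesis
      proof
        show "integrable ?Q (\<lambda>\<omega>. (Ms t \<omega>)\<^sup>2)"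
          using integrable_cong_AE[of "\<lambda>\<omega>. (Ms t \<omega>)\<^sup>2" ?Q "\<lambda>_. 0"] zero t by simp
        show "(\<integral>\<omega>. (Ms t \<omega>)\<^sup>2 \<partial>?Q) \<le> C"
          using integral_cong_AE[of "\<lambda>\<omega>. (Ms t \<omega>)\<^sup>2" ?Q "\<lambda>_. 0"] zero t C0 by simp
      qed
    next
      case ts: False
      show ?thesis
      proof (cases "t \<le> T")
        case True then show ?thesis using ts by (intro inner) auto
      next
        case tT: False
        have T0: "0 \<le> T" using s True by auto
        have "AE \<omega> in ?Q. M T t \<omega> = Ms t \<omega> - Ms T \<omega>" by (rule AE_completion) (rule ae, use True tT in auto)
        then have eqT: "AE \<omega> in ?Q. (Ms t \<omega>)\<^sup>2 = (Ms T \<omega>)\<^sup>2"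
          using AEsp by eventually_elim (use tT in \<open>auto simp: Mz\<close>)
        have mT: "Ms T \<in> borel_measurable ?Q" using T0 by (rule MsQ)
        have "integrable ?Q (\<lambda>\<omega>. (Ms t \<omega>)\<^sup>2) \<longleftrightarrow> integrable ?Q (\<lambda>\<omega>. (Ms T \<omega>)\<^sup>2)"
          by (rule integrable_cong_AE) (use eqT t mT in auto)
        moreover have "(\<integral>\<omega>. (Ms t \<omega>)\<^sup>2 \<partial>?Q) = (\<integral>\<omega>. (Ms T \<omega>)\<^sup>2 \<partial>?Q)"
          by (rule integral_cong_AE) (use eqT t mT in auto)
        ultimately show ?thesis using inner[of T] True by simp
      qed
    qed
    then show ?thesis unfolding square_integrable_proc_def by blast
  qed
qed

lemma Mz_lemma:
  fixes \<Phi> A\<Phi> :: "real \<Rightarrow> (real \<Rightarrow> 'e::polish_space) \<Rightarrow> real"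
  assumes V: "integrator T V" and const: "\<And>t \<omega>. T \<le> t \<Longrightarrow> \<omega> \<in> Omega \<Longrightarrow> \<Phi> t \<omega> = \<Phi> T \<omega>"
    and zero: "\<And>t \<omega>. T < t \<Longrightarrow> \<omega> \<in> Omega \<Longrightarrow> A\<Phi> t \<omega> = 0"
    and ab: "T \<le> a" "a \<le> b" "\<omega> \<in> Omega"
  shows "MPhi V \<Phi> A\<Phi> a b \<omega> = 0"
proof -
  have "emeasure (interval_measure V) {T..T} = ennreal (V T - V T)" by (rule integrator_facts(4)[OF V]) simp
  then have null: "{T} \<in> null_sets (interval_measure V)" by (auto intro: null_setsI)
  have "dVint V a b (\<lambda>r. A\<Phi> r \<omega>) = 0" unfolding dVint_eq
  proof (rule integral_eq_zero_AE)
    show "AE r in interval_measure V. indicator {a..b} r * A\<Phi> r \<omega> = 0"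
      using AE_not_in[OF null] by eventually_elim (use ab in \<open>auto simp: indicator_def intro!: zero\<close>)
  qed
  then show ?thesis using ab const[of a \<omega>] const[of b \<omega>] by (simp add: MPhi_def)
qed

theorem lemma4p15:
  fixes P :: "real \<Rightarrow> (real \<Rightarrow> 'e::polish_space) \<Rightarrow> (real \<Rightarrow> 'e) measure"
    and T :: real and V :: "real \<Rightarrow> real"
    and D :: "(real \<Rightarrow> (real \<Rightarrow> 'e) \<Rightarrow> real) set"
    and A :: "(real \<Rightarrow> (real \<Rightarrow> 'e) \<Rightarrow> real) \<Rightarrow> (real \<Rightarrow> (real \<Rightarrow> 'e) \<Rightarrow> real)"
    and \<Phi> :: "real \<Rightarrow> (real \<Rightarrow> 'e) \<Rightarrow> real"
  assumes P: "markov_family P"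
    and V: "integrator T V"
    and DA: "weak_generator P T V D A"
    and MAF: "\<forall>\<Psi>\<in>D. is_MAF P (MPhi V \<Psi> (A \<Psi>))"
    and Phi: "\<Phi> \<in> D"
    and Phi2: "(\<lambda>t \<omega>. (\<Phi> t \<omega>)\<^sup>2) \<in> D"
    and APhi: "A \<Phi> \<in> L2_uni P T V"
  shows "square_integrable_MAF P (MPhi V \<Phi> (A \<Phi>)) \<and>
    (\<forall>s\<in>{0..T}. \<forall>\<eta>\<in>Omega. \<forall>Ms. MAF_version P s \<eta> (MPhi V \<Phi> (A \<Phi>)) Ms \<longrightarrow>
       (let \<Phi>s = (\<lambda>t \<omega>. \<Phi> s \<eta> + dVint V s (max s t) (\<lambda>r. A \<Phi> r \<omega>) + Ms t \<omega>);
            S = (\<lambda>\<omega>. \<Squnion>t\<in>{s..T}. ennreal \<bar>\<Phi>s t \<omega>\<bar>)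
        in S \<in> borel_measurable (completion (P s \<eta>)) \<and>
           (\<integral>\<^sup>+ \<omega>. (S \<omega>)\<^sup>2 \<partial>completion (P s \<eta>)) < \<infinity>))"
proof -
  have T0: "0 < T" using V by (simp add: integrator_def)
  note W = DA[unfolded weak_generator_def, THEN conjunct2, THEN conjunct2, THEN conjunct2]
  have W1: "progressive \<Phi> \<and> progressive (A \<Phi>) \<and>
        (\<forall>\<omega>\<in>Omega. \<forall>t\<ge>0. dVint_abs V 0 t (\<lambda>r. A \<Phi> r \<omega>) < \<infinity>) \<and>
        (\<forall>s\<ge>0. \<forall>\<eta>\<in>Omega. \<forall>t\<ge>s.
            (\<integral>\<^sup>+ \<omega>. dVint_abs V s t (\<lambda>r. A \<Phi> r \<omega>) \<partial>P s \<eta>) < \<infinity> \<and>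
            integrable (P s \<eta>) (\<Phi> t)) \<and>
        (\<forall>t\<ge>T. \<forall>\<omega>\<in>Omega. \<Phi> t \<omega> = \<Phi> T \<omega>) \<and>
        (\<forall>t>T. \<forall>\<omega>\<in>Omega. A \<Phi> t \<omega> = 0) \<and>
        (\<forall>s\<ge>0. \<forall>\<eta>\<in>Omega. \<forall>t\<ge>s.
            (\<integral>\<omega>. \<Phi> t \<omega> \<partial>P s \<eta>) =
              \<Phi> s \<eta> + dVint V s t (\<lambda>r. \<integral>\<omega>. A \<Phi> r \<omega> \<partial>P s \<eta>))"
    using bspec[OF W Phi] .
  have W2: "\<forall>s\<ge>0. \<forall>\<eta>\<in>Omega. \<forall>t\<ge>s. integrable (P s \<eta>) (\<lambda>\<omega>. (\<Phi> t \<omega>)\<^sup>2)"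
    using bspec[OF W Phi2, THEN conjunct2, THEN conjunct2, THEN conjunct2, THEN conjunct1] by simp
  have progA: "progressive (A \<Phi>)" using W1 by (elim conjE)
  have finA: "\<And>\<omega> t. \<omega> \<in> Omega \<Longrightarrow> 0 \<le> t \<Longrightarrow> dVint_abs V 0 t (\<lambda>r. A \<Phi> r \<omega>) < \<infinity>"
    using W1 by (elim conjE) blast
  have int\<Phi>: "\<And>s \<eta> t. 0 \<le> s \<Longrightarrow> \<eta> \<in> Omega \<Longrightarrow> s \<le> t \<Longrightarrow> integrable (P s \<eta>) (\<Phi> t)"
    using W1 by (elim conjE) blast
  have int\<Phi>2: "\<And>s \<eta> t. 0 \<le> s \<Longrightarrow> \<eta> \<in> Omega \<Longrightarrow> s \<le> t \<Longrightarrow> integrable (P s \<eta>) (\<lambda>\<omega>. (\<Phi> t \<omega>)\<^sup>2)"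
    using W2 by blast
  have const: "\<And>t \<omega>. T \<le> t \<Longrightarrow> \<omega> \<in> Omega \<Longrightarrow> \<Phi> t \<omega> = \<Phi> T \<omega>"
    using W1 by (elim conjE) blast
  have zeroA: "\<And>t \<omega>. T < t \<Longrightarrow> \<omega> \<in> Omega \<Longrightarrow> A \<Phi> t \<omega> = 0"
    using W1 by (elim conjE) blast
  have Pf: "\<And>s \<eta>. 0 \<le> s \<Longrightarrow> \<eta> \<in> Omega \<Longrightarrow> prob_space (P s \<eta>) \<and> sets (P s \<eta>) = sets Fall"
    using P unfolding markov_family_def by blast
  have L2A: "\<And>s \<eta>. 0 \<le> s \<Longrightarrow> s \<le> T \<Longrightarrow> \<eta> \<in> Omega \<Longrightarrow>
      (\<integral>\<^sup>+\<omega>. set_nn_integral (interval_measure V) {s..T} (\<lambda>r. ennreal ((A \<Phi> r \<omega>)\<^sup>2)) \<partial>P s \<eta>) < \<infinity>"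
    using APhi unfolding L2_uni_def by auto
  have Mz: "\<And>a b \<omega>. T \<le> a \<Longrightarrow> a \<le> b \<Longrightarrow> \<omega> \<in> Omega \<Longrightarrow> MPhi V \<Phi> (A \<Phi>) a b \<omega> = 0"
    by (rule Mz_lemma[where \<Phi>=\<Phi> and A\<Phi>="A \<Phi>", OF V const zeroA]) auto
  have isM: "is_MAF P (MPhi V \<Phi> (A \<Phi>))" using MAF Phi by blast
  have corefacts: "(\<forall>t. s \<le> t \<and> t \<le> T \<longrightarrow> integrable (completion (P s \<eta>)) (\<lambda>\<omega>. (Ms t \<omega>)\<^sup>2)) \<and>
       (\<integral>\<^sup>+\<omega>. (SUP t\<in>{s..T}. ennreal \<bar>Ms t \<omega>\<bar>)\<^sup>2 \<partial>completion (P s \<eta>)) < \<infinity> \<and>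
       (\<lambda>\<omega>. SUP t\<in>{s..T}. ennreal \<bar>\<Phi> s \<eta> + dVint V s (max s t) (\<lambda>r. A \<Phi> r \<omega>) + Ms t \<omega>\<bar>) \<in> borel_measurable (completion (P s \<eta>)) \<and>
       (\<integral>\<^sup>+\<omega>. (SUP t\<in>{s..T}. ennreal \<bar>\<Phi> s \<eta> + dVint V s (max s t) (\<lambda>r. A \<Phi> r \<omega>) + Ms t \<omega>\<bar>)\<^sup>2 \<partial>completion (P s \<eta>)) < \<infinity>"
    if s: "0 \<le> s" "s \<le> T" and \<eta>: "\<eta> \<in> Omega" and mv: "MAF_version P s \<eta> (MPhi V \<Phi> (A \<Phi>)) Ms" for s \<eta> Ms
  proof -
    have pf: "prob_space (P s \<eta>)" "sets (P s \<eta>) = sets Fall" using Pf[OF s(1) \<eta>] by auto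
    have cm: "cadlag_martingale (completion (P s \<eta>)) (Fcompl (P s \<eta>)) Ms"
      and z: "\<And>t \<omega>. t \<in> {0..s} \<Longrightarrow> \<omega> \<in> Omega \<Longrightarrow> Ms t \<omega> = 0"
      and ae: "\<And>t u. s \<le> t \<Longrightarrow> t \<le> u \<Longrightarrow> (AE \<omega> in P s \<eta>. MPhi V \<Phi> (A \<Phi>) t u \<omega> = Ms u \<omega> - Ms t \<omega>)"
      using mv unfolding MAF_version_def by auto
    have finA': "\<And>\<omega>. \<omega> \<in> Omega \<Longrightarrow> dVint_abs V 0 T (\<lambda>r. A \<Phi> r \<omega>) < \<infinity>"
      using finA T0 by auto
    have iP: "\<And>t. s \<le> t \<Longrightarrow> integrable (P s \<eta>) (\<Phi> t)" using int\<Phi> s \<eta> by auto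
    have iP2: "\<And>t. s \<le> t \<Longrightarrow> integrable (P s \<eta>) (\<lambda>\<omega>. (\<Phi> t \<omega>)\<^sup>2)" using int\<Phi>2 s \<eta> by auto
    note C = core[OF V pf s progA L2A[OF s \<eta>] finA' iP iP2 cm z ae]
    have c1: "\<forall>t. s \<le> t \<and> t \<le> T \<longrightarrow> integrable (completion (P s \<eta>)) (\<lambda>\<omega>. (Ms t \<omega>)\<^sup>2)"
      using C(1) by blast
    show ?thesis using c1 C(2) C(3)[of "\<Phi> s \<eta>"] C(4)[of "\<Phi> s \<eta>"] by blast
  qed
  have part1: "square_integrable_MAF P (MPhi V \<Phi> (A \<Phi>))"
    unfolding square_integrable_MAF_def
  proof (intro conjI isM allI impI ballI)
    fix s \<eta> Ms assume s: "0 \<le> s" and \<eta>: "\<eta> \<in> Omega" and mv: "MAF_version P s \<eta> (MPhi V \<Phi> (A \<Phi>)) Ms"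
    have pf: "prob_space (P s \<eta>)" "sets (P s \<eta>) = sets Fall" using Pf[OF s \<eta>] by auto
    have cm: "cadlag_martingale (completion (P s \<eta>)) (Fcompl (P s \<eta>)) Ms"
      and z: "\<And>t \<omega>. t \<in> {0..s} \<Longrightarrow> \<omega> \<in> Omega \<Longrightarrow> Ms t \<omega> = 0"
      and ae: "\<And>t u. s \<le> t \<Longrightarrow> t \<le> u \<Longrightarrow> (AE \<omega> in P s \<eta>. MPhi V \<Phi> (A \<Phi>) t u \<omega> = Ms u \<omega> - Ms t \<omega>)"
      using mv unfolding MAF_version_def by auto
    show "square_integrable_proc (completion (P s \<eta>)) Ms"
    proof (rule sq_int_proc[OF pf s cm z ae Mz])
      assume "s \<le> T"
      then show "(\<forall>t. s \<le> t \<and> t \<le> T \<longrightarrow> integrable (completion (P s \<eta>)) (\<lambda>\<omega>. (Ms t \<omega>)\<^sup>2)) \<and>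
         (\<integral>\<^sup>+\<omega>. (SUP t\<in>{s..T}. ennreal \<bar>Ms t \<omega>\<bar>)\<^sup>2 \<partial>completion (P s \<eta>)) < \<infinity>"
        using corefacts[OF s _ \<eta> mv] by blast
    qed auto
  qed
  show ?thesis
  proof (intro conjI part1 ballI allI impI)
    fix s \<eta> Ms assume s: "s \<in> {0..T}" and \<eta>: "\<eta> \<in> Omega" and mv: "MAF_version P s \<eta> (MPhi V \<Phi> (A \<Phi>)) Ms"
    have s': "0 \<le> s" "s \<le> T" using s by auto
    show "let \<Phi>s = (\<lambda>t \<omega>. \<Phi> s \<eta> + dVint V s (max s t) (\<lambda>r. A \<Phi> r \<omega>) + Ms t \<omega>);
            S = (\<lambda>\<omega>. \<Squnion>t\<in>{s..T}. ennreal \<bar>\<Phi>s t \<omega>\<bar>)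
        in S \<in> borel_measurable (completion (P s \<eta>)) \<and>
           (\<integral>\<^sup>+ \<omega>. (S \<omega>)\<^sup>2 \<partial>completion (P s \<eta>)) < \<infinity>"
      using corefacts[OF s' \<eta> mv] by (simp only: Let_def)
  qed
qed


end
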